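(* Let $(\mathcal L(s),\mathcal P(s))$ be a solution of the $N$-dcmKP hierarchy, with $\mathcal L=k+u_1(s,t)+u_2(s,t)k^{-1}+\cdots$ and $\mathcal P=p_0(s,t)k^N+\cdots$. Then $$\mathcal L^{\mathrm{dmKP}}(k;s,t):=\mathcal L(k-u_1(s,t);s,t),\qquad \mathcal P^{\mathrm{dmKP}}(k;s,t):=p_0(s,t)^{-1}\mathcal P(k-u_1(s,t);s,t)$$ is a solution of the dmKP hierarchy.
   Context: Fix a positive integer $N$. Variables $s$ (continuous), $x$, $t=(t_1,t_2,\dots)$; Poisson bracket $\{f,g\}=\frac{\partial f}{\partial k}\frac{\partial g}{\partial x}-\frac{\partial f}{\partial x}\frac{\partial g}{\partial k}$. For a series, $(\cdot)_{>0}$, $(\cdot)_{\ge0}$ denote projections onto powers $k^n$ with $n>0$, resp. $n\ge0$. For a series $\mathcal P=p_0k^N+\sum_{n\ge1}p_nk^{N-n}$, $\log\mathcal P:=\log p_0+N\log k+\log(1+\sum_{n\ge1}(p_n/p_0)k^{-n})$ expanded in $k^{-1}$. The $N$-dcmKP hierarchy: $\mathcal L=k+\sum_{n\ge1}u_n(s,t)k^{1-n}$, $\mathcal P=\sum_{n=0}^{N-1}p_n(s,t)k^{N-n}$ with $p_0\ne0$, satisfying $\partial_{t_n}\mathcal L=\{\mathcal B_n,\mathcal L\}$ with $\mathcal B_n:=(\mathcal L^n)_{>0}$, $\partial_s\mathcal L=\{\log\mathcal P,\mathcal L\}$, $\partial_{t_n}\log\mathcal P=\partial_s\mathcal B_n-\{\log\mathcal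 P,\mathcal B_n\}$ ($n\ge1$). The dmKP hierarchy: $\mathcal L^{\mathrm{dmKP}}=k+u^{\mathrm{dmKP}}_2k^{-1}+u^{\mathrm{dmKP}}_3k^{-2}+\cdots$ (no $k^0$ term) and $\mathcal P^{\mathrm{dmKP}}=k^N+q_1k^{N-1}+\cdots+q_N$, satisfying the same three equations with $\mathcal B_n$ replaced by $\mathcal B^{\mathrm{dmKP}}_n:=((\mathcal L^{\mathrm{dmKP}})^n)_{\ge0}$. *)

theory Defs
  imports "HOL-Analysis.Analysis"
begin

text \<open>
  Coefficient functions depend on the continuous variable s, the variable x, and the
  times t = (t_1, t_2, ...), represented as t :: nat => real with t_n = t n for n >= 1
  (the entry t 0 is an inert extra parameter).  A series in k with finitely many
  positive powers is represented by its coefficient map: (a n) is the coefficient of k^n.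
\<close>

type_synonym cf = "real \<Rightarrow> real \<Rightarrow> (nat \<Rightarrow> real) \<Rightarrow> real"
type_synonym ser = "int \<Rightarrow> cf"

definition cf0 :: cf where "cf0 = (\<lambda>s x t. 0)"

definition pd_s :: "cf \<Rightarrow> cf" where
  "pd_s f = (\<lambda>s x t. deriv (\<lambda>\<sigma>. f \<sigma> x t) s)"

definition pd_x :: "cf \<Rightarrow> cf" where
  "pd_x f = (\<lambda>s x t. deriv (\<lambda>y. f s y t) x)"

definition pd_t :: "nat \<Rightarrow> cf \<Rightarrow> cf" where
  "pd_t n f = (\<lambda>s x t. deriv (\<lambda>\<tau>. f s x (t(n := \<tau>))) (t n))"

definition cf_diff :: "cf \<Rightarrow> bool" where
  "cf_diff f \<longleftrightarrow> (\<forall>s x t.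
      (\<lambda>\<sigma>. f \<sigma> x t) differentiable (at s) \<and>
      (\<lambda>y. f s y t) differentiable (at x) \<and>
      (\<forall>n\<ge>1. (\<lambda>\<tau>. f s x (t(n := \<tau>))) differentiable (at (t n))))"

definition ser_one :: ser where
  "ser_one = (\<lambda>n s x t. if n = 0 then 1 else 0)"

definition ser_diff :: "ser \<Rightarrow> ser \<Rightarrow> ser" where
  "ser_diff a b = (\<lambda>n s x t. a n s x t - b n s x t)"

text \<open>Product (the sum is finite for series with finitely many positive powers).\<close>
definition ser_mult :: "ser \<Rightarrow> ser \<Rightarrow> ser" where
  "ser_mult a b = (\<lambda>n s x t.
     \<Sum>i\<in>{i. a i s x t \<noteq> 0 \<and> b (n - i) s x t \<noteq> 0}. a i s x t * b (n - i) s x t)"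

fun ser_pow :: "ser \<Rightarrow> nat \<Rightarrow> ser" where
  "ser_pow a 0 = ser_one"
| "ser_pow a (Suc n) = ser_mult a (ser_pow a n)"

definition proj_pos :: "ser \<Rightarrow> ser" where
  "proj_pos a = (\<lambda>n. if n > 0 then a n else cf0)"

definition proj_nonneg :: "ser \<Rightarrow> ser" where
  "proj_nonneg a = (\<lambda>n. if n \<ge> 0 then a n else cf0)"

definition ser_dk :: "ser \<Rightarrow> ser" where
  "ser_dk a = (\<lambda>n s x t. of_int (n + 1) * a (n + 1) s x t)"

definition ser_dx :: "ser \<Rightarrow> ser" where "ser_dx a = (\<lambda>n. pd_x (a n))"
definition ser_ds :: "ser \<Rightarrow> ser" where "ser_ds a = (\<lambda>n. pd_s (a n))"
definition ser_dt :: "nat \<Rightarrow> ser \<Rightarrow> ser" where "ser_dt m a = (\<lambda>n. pd_t m (a n))"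

definition pb :: "ser \<Rightarrow> ser \<Rightarrow> ser" where
  "pb f g = ser_diff (ser_mult (ser_dk f) (ser_dx g)) (ser_mult (ser_dx f) (ser_dk g))"

text \<open>Substitution k \<mapsto> k - a, expanded in powers of k^{-1}:
  (k - a)^n = \<Sum>_{i\<ge>0} (n gchoose i) (-a)^i k^{n-i} for every integer n.\<close>
definition ser_shift :: "ser \<Rightarrow> cf \<Rightarrow> ser" where
  "ser_shift c a = (\<lambda>m s x t.
     \<Sum>n\<in>{n. m \<le> n \<and> c n s x t \<noteq> 0}.
        c n s x t * ((of_int n :: real) gchoose nat (n - m)) * (- a s x t) ^ nat (n - m))"

text \<open>For P = p_0 k^N + (lower powers), log P = log p_0 + N log k + log(1 + Q) with
  Q = \<Sum>_{m\<ge>1} (p_m/p_0) k^{-m}.  We represent log P by the series part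
  logP_ser N P = log p_0 + log(1+Q) (expanded in k^{-1}); the N log k term only enters
  through d/dk (giving N k^{-1}), see dk_logP.  Since log p_0 only enters through
  derivatives, log p_0 is taken as ln |p_0| (its derivatives are p_0'/p_0).\<close>

definition logQ :: "nat \<Rightarrow> ser \<Rightarrow> ser" where
  "logQ N P = (\<lambda>j s x t. if j < 0 then P (int N + j) s x t / P (int N) s x t else 0)"

definition logP_ser :: "nat \<Rightarrow> ser \<Rightarrow> ser" where
  "logP_ser N P = (\<lambda>n s x t.
     if n = 0 then ln \<bar>P (int N) s x t\<bar>
     else if n < 0 then
       (\<Sum>j\<in>{1..nat (- n)}. (-1) ^ (j + 1) / real j * ser_pow (logQ N P) j n s x t)
     else 0)"

definition dk_logP :: "nat \<Rightarrow> ser \<Rightarrow> ser" where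
  "dk_logP N P = (\<lambda>n s x t. (if n = -1 then real N else 0) + ser_dk (logP_ser N P) n s x t)"

definition pb_log :: "nat \<Rightarrow> ser \<Rightarrow> ser \<Rightarrow> ser" where
  "pb_log N P g = ser_diff (ser_mult (dk_logP N P) (ser_dx g))
                           (ser_mult (ser_dx (logP_ser N P)) (ser_dk g))"

definition hier_eqs :: "(nat \<Rightarrow> ser) \<Rightarrow> nat \<Rightarrow> ser \<Rightarrow> ser \<Rightarrow> bool" where
  "hier_eqs B N L P \<longleftrightarrow>
     (\<forall>n\<ge>1. ser_dt n L = pb (B n) L) \<and>
     ser_ds L = pb_log N P L \<and>
     (\<forall>n\<ge>1. ser_dt n (logP_ser N P) = ser_diff (ser_ds (B n)) (pb_log N P (B n)))"

definition dcmKP :: "nat \<Rightarrow> ser \<Rightarrow> ser \<Rightarrow> bool" where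
  "dcmKP N L P \<longleftrightarrow>
     0 < N \<and>
     (\<forall>s x t. L 1 s x t = 1) \<and> (\<forall>n>1. L n = cf0) \<and>
     (\<forall>n. (n < 1 \<or> n > int N) \<longrightarrow> P n = cf0) \<and>
     (\<forall>s x t. P (int N) s x t \<noteq> 0) \<and>
     (\<forall>n. cf_diff (L n)) \<and> (\<forall>n. cf_diff (P n)) \<and>
     hier_eqs (\<lambda>n. proj_pos (ser_pow L n)) N L P"

definition dmKP :: "nat \<Rightarrow> ser \<Rightarrow> ser \<Rightarrow> bool" where
  "dmKP N L P \<longleftrightarrow>
     (\<forall>s x t. L 1 s x t = 1) \<and> L 0 = cf0 \<and> (\<forall>n>1. L n = cf0) \<and>
     (\<forall>s x t. P (int N) s x t = 1) \<and>
     (\<forall>n. (n < 0 \<or> n > int N) \<longrightarrow> P n = cf0) \<and>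
     (\<forall>n. cf_diff (L n)) \<and> (\<forall>n. cf_diff (P n)) \<and>
     hier_eqs (\<lambda>n. proj_nonneg (ser_pow L n)) N L P"

end

theory Submission
  imports Defs "HOL-Computational_Algebra.Formal_Laurent_Series"
begin

unbundle fps_syntax

definition ub :: "ser \<Rightarrow> int \<Rightarrow> bool" where "ub a d \<longleftrightarrow> (\<forall>n>d. \<forall>s x t. a n s x t = 0)"
definition bnd :: "ser \<Rightarrow> bool" where "bnd a \<longleftrightarrow> (\<exists>d. ub a d)"
definition FL :: "ser \<Rightarrow> real \<Rightarrow> real \<Rightarrow> (nat \<Rightarrow> real) \<Rightarrow> real fls" where
  "FL a s x t = Abs_fls (\<lambda>n. a (-n) s x t)"

lemma ubD: "ub a d \<Longrightarrow> d < n \<Longrightarrow> a n s x t = 0" by (auto simp: ub_def)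
lemma ub_mono: "ub a d \<Longrightarrow> d \<le> e \<Longrightarrow> ub a e" by (auto simp: ub_def)
lemma bndI: "ub a d \<Longrightarrow> bnd a" by (auto simp: bnd_def)

lemma FL_nth_ub: "ub a d \<Longrightarrow> FL a s x t $$ n = a (-n) s x t"
  unfolding FL_def by (rule nth_Abs_fls_lower_bound[where N="-d"]) (auto simp: ub_def)
lemma FL_nth: "bnd a \<Longrightarrow> FL a s x t $$ n = a (-n) s x t"
  by (auto simp: bnd_def intro: FL_nth_ub)

lemma ser_eqI: assumes "bnd a" "bnd b" "\<And>s x t. FL a s x t = FL b s x t" shows "a = b"
proof (intro ext)
  fix n s x t
  have "FL a s x t $$ (-n) = FL b s x t $$ (-n)" using assms(3) by simp
  thus "a n s x t = b n s x t" using FL_nth[OF assms(1)] FL_nth[OF assms(2)] by simp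
qed

definition ser_add :: "ser \<Rightarrow> ser \<Rightarrow> ser" where "ser_add a b = (\<lambda>n s x t. a n s x t + b n s x t)"
definition ser_smul :: "cf \<Rightarrow> ser \<Rightarrow> ser" where "ser_smul c a = (\<lambda>n s x t. c s x t * a n s x t)"
definition ser_const :: "cf \<Rightarrow> ser" where "ser_const c = (\<lambda>n s x t. if n = 0 then c s x t else 0)"
definition ser_mono :: "int \<Rightarrow> ser" where "ser_mono N = (\<lambda>n s x t. if n = N then 1 else 0)"

lemma ub_add: "ub a d \<Longrightarrow> ub b e \<Longrightarrow> ub (ser_add a b) (max d e)"
  by (auto simp: ub_def ser_add_def)
lemma ub_diff: "ub a d \<Longrightarrow> ub b e \<Longrightarrow> ub (ser_diff a b) (max d e)"
  by (auto simp: ub_def ser_diff_def)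
lemma ub_smul: "ub a d \<Longrightarrow> ub (ser_smul c a) d"
  by (auto simp: ub_def ser_smul_def)
lemma ub_const: "ub (ser_const c) 0" by (auto simp: ub_def ser_const_def)
lemma ub_one: "ub ser_one 0" by (auto simp: ub_def ser_one_def)
lemma ub_mono_ser: "ub (ser_mono N) N" by (auto simp: ub_def ser_mono_def)
lemma ub_dk: "ub a d \<Longrightarrow> ub (ser_dk a) (d - 1)" by (auto simp: ub_def ser_dk_def)

lemma bnd_add [simp]: "bnd a \<Longrightarrow> bnd b \<Longrightarrow> bnd (ser_add a b)"
  by (meson bndI bnd_def ub_add)
lemma bnd_diff [simp]: "bnd a \<Longrightarrow> bnd b \<Longrightarrow> bnd (ser_diff a b)"
  by (meson bndI bnd_def ub_diff)
lemma bnd_smul [simp]: "bnd a \<Longrightarrow> bnd (ser_smul c a)"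
  by (meson bndI bnd_def ub_smul)
lemma bnd_const [simp]: "bnd (ser_const c)" by (meson bndI ub_const)
lemma bnd_one [simp]: "bnd ser_one" by (meson bndI ub_one)
lemma bnd_mono [simp]: "bnd (ser_mono N)" by (meson bndI ub_mono_ser)
lemma bnd_dk [simp]: "bnd a \<Longrightarrow> bnd (ser_dk a)" by (meson bndI bnd_def ub_dk)

lemma FL_add [simp]: assumes "bnd a" "bnd b" shows "FL (ser_add a b) s x t = FL a s x t + FL b s x t"
  by (rule fls_eqI) (simp only: fls_plus_nth FL_nth[OF bnd_add[OF assms]] FL_nth[OF assms(1)] FL_nth[OF assms(2)], simp add: ser_add_def)
lemma FL_diff [simp]: assumes "bnd a" "bnd b" shows "FL (ser_diff a b) s x t = FL a s x t - FL b s x t"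
  by (rule fls_eqI) (simp only: fls_minus_nth FL_nth[OF bnd_diff[OF assms]] FL_nth[OF assms(1)] FL_nth[OF assms(2)], simp add: ser_diff_def)
lemma FL_smul [simp]: assumes "bnd a" shows "FL (ser_smul c a) s x t = fls_const (c s x t) * FL a s x t"
  by (rule fls_eqI) (simp only: fls_mult_const_nth FL_nth[OF bnd_smul[OF assms]] FL_nth[OF assms(1)], simp add: ser_smul_def)
lemma FL_const [simp]: "FL (ser_const c) s x t = fls_const (c s x t)"
  by (rule fls_eqI) (simp only: FL_nth[OF bnd_const], simp add: ser_const_def)
lemma FL_one [simp]: "FL ser_one s x t = 1"
  by (rule fls_eqI) (simp only: FL_nth[OF bnd_one], simp add: ser_one_def)
lemma FL_mono: "FL (ser_mono N) s x t = fls_shift N 1"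
  by (rule fls_eqI) (simp only: FL_nth[OF bnd_mono], simp add: ser_mono_def)
lemma FL_dk [simp]: "bnd a \<Longrightarrow> FL (ser_dk a) s x t = - (fls_X ^ 2 * fls_deriv (FL a s x t))"
  apply (rule fls_eqI)
  apply (simp only: FL_nth[OF bnd_dk] fls_uminus_nth)
  apply (simp add: FL_nth ser_dk_def fls_X_power_times_conv_shift)
  apply (simp add: algebra_simps)
  done

lemma mult_sum:
  assumes "ub a d" "ub b e"
  shows "ser_mult a b n s x t = (\<Sum>i\<in>{n-e..d}. a i s x t * b (n-i) s x t)"
  unfolding ser_mult_def
proof (rule sum.mono_neutral_left)
  show "finite {n - e..d}" by simp
  show "{i. a i s x t \<noteq> 0 \<and> b (n - i) s x t \<noteq> 0} \<subseteq> {n - e..d}"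
  proof
    fix i assume "i \<in> {i. a i s x t \<noteq> 0 \<and> b (n - i) s x t \<noteq> 0}"
    hence "\<not> d < i" "\<not> e < n - i" using assms by (auto simp: ub_def)
    thus "i \<in> {n - e..d}" by auto
  qed
  show "\<forall>i\<in>{n - e..d} - {i. a i s x t \<noteq> 0 \<and> b (n - i) s x t \<noteq> 0}. a i s x t * b (n - i) s x t = 0"
    by auto
qed

lemma ub_mult: "ub a d \<Longrightarrow> ub b e \<Longrightarrow> ub (ser_mult a b) (d + e)"
  unfolding ub_def[of "ser_mult a b"] by (auto simp: mult_sum)

lemma bnd_mult [simp]: "bnd a \<Longrightarrow> bnd b \<Longrightarrow> bnd (ser_mult a b)"
  by (meson bndI bnd_def ub_mult)

lemma fls_times_nth_bounds:
  fixes f g :: "real fls"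
  assumes "\<And>i. i < lf \<Longrightarrow> f $$ i = 0" "\<And>i. i < lg \<Longrightarrow> g $$ i = 0"
  shows "(f * g) $$ n = (\<Sum>i\<in>{lf..n-lg}. f $$ i * g $$ (n - i))"
proof (cases "f = 0 \<or> g = 0")
  case True thus ?thesis by auto
next
  case False
  hence f0: "f \<noteq> 0" and g0: "g \<noteq> 0" by auto
  have lf: "lf \<le> fls_subdegree f" by (rule fls_subdegree_geI[OF f0 assms(1)])
  have lg: "lg \<le> fls_subdegree g" by (rule fls_subdegree_geI[OF g0 assms(2)])
  have "(f * g) $$ n = (\<Sum>i\<in>{fls_subdegree f..n - fls_subdegree g}. f $$ i * g $$ (n - i))"
    by (rule fls_times_nth(2))
  also have "\<dots> = (\<Sum>i\<in>{lf..n-lg}. f $$ i * g $$ (n - i))"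
  proof (rule sum.mono_neutral_left)
    show "finite {lf..n - lg}" by simp
    show "{fls_subdegree f..n - fls_subdegree g} \<subseteq> {lf..n - lg}" using lf lg by auto
    show "\<forall>i\<in>{lf..n - lg} - {fls_subdegree f..n - fls_subdegree g}. f $$ i * g $$ (n - i) = 0"
      by auto
  qed
  finally show ?thesis .
qed

lemma sum_neg_interval: "(\<Sum>i\<in>{a..b::int}. f i) = (\<Sum>i\<in>{-b..-a}. f (-i))"
  by (rule sum.reindex_bij_witness[of _ uminus uminus]) auto

lemma FL_mult [simp]:
  assumes "bnd a" "bnd b"
  shows "FL (ser_mult a b) s x t = FL a s x t * FL b s x t"
proof -
  obtain d e where d: "ub a d" and e: "ub b e" using assms by (auto simp: bnd_def)
  show ?thesis
  proof (rule fls_eqI)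
    fix n
    have "(FL a s x t * FL b s x t) $$ n = (\<Sum>i\<in>{-d..n-(-e)}. FL a s x t $$ i * FL b s x t $$ (n - i))"
      by (rule fls_times_nth_bounds) (auto simp: FL_nth_ub[OF d] FL_nth_ub[OF e] ub_def intro!: ubD[OF d] ubD[OF e])
    also have "\<dots> = (\<Sum>i\<in>{-d..n+e}. a (-i) s x t * b (i - n) s x t)"
      by (simp add: FL_nth_ub[OF d] FL_nth_ub[OF e])
    also have "\<dots> = (\<Sum>i\<in>{-n-e..d}. a i s x t * b (-n - i) s x t)"
      by (subst sum_neg_interval) (simp add: algebra_simps)
    also have "\<dots> = ser_mult a b (-n) s x t" by (simp add: mult_sum[OF d e])
    finally show "FL (ser_mult a b) s x t $$ n = (FL a s x t * FL b s x t) $$ n"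
      using FL_nth[OF bnd_mult[OF assms]] by simp
  qed
qed

lemma ub_pow: "ub a d \<Longrightarrow> ub (ser_pow a n) (int n * d)"
proof (induction n)
  case 0 thus ?case using ub_one by simp
next
  case (Suc n)
  have "ub (ser_mult a (ser_pow a n)) (d + int n * d)" by (rule ub_mult[OF Suc.prems Suc.IH[OF Suc.prems]])
  thus ?case by (simp add: algebra_simps)
qed

lemma bnd_pow [simp]: "bnd a \<Longrightarrow> bnd (ser_pow a n)"
  by (meson bndI bnd_def ub_pow)

lemma FL_pow [simp]: "bnd a \<Longrightarrow> FL (ser_pow a n) s x t = FL a s x t ^ n"
  by (induction n) auto

lemma mono_mult: "ser_mult (ser_mono a) (ser_mono b) = ser_mono (a + b)"
  by (rule ser_eqI) (auto simp: FL_mono fls_shifted_times_simps)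

definition CC :: "real \<Rightarrow> int \<Rightarrow> int \<Rightarrow> real" where
  "CC w n q = (of_int n gchoose nat q) * w ^ nat q"

lemma shift_sum:
  assumes "ub c d"
  shows "ser_shift c u m s x t = (\<Sum>n\<in>{m..d}. c n s x t * CC (- u s x t) n (n - m))"
  unfolding ser_shift_def CC_def mult.assoc
proof (rule sum.mono_neutral_left)
  show "finite {m..d}" by simp
  show "{n. m \<le> n \<and> c n s x t \<noteq> 0} \<subseteq> {m..d}"
  proof
    fix n assume "n \<in> {n. m \<le> n \<and> c n s x t \<noteq> 0}"
    hence "m \<le> n" "\<not> d < n" using assms by (auto simp: ub_def)
    thus "n \<in> {m..d}" by auto
  qed
  show "\<forall>i\<in>{m..d} - {n. m \<le> n \<and> c n s x t \<noteq> 0}.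
       c i s x t * ((of_int i gchoose nat (i - m)) * (- u s x t) ^ nat (i - m)) = 0" by auto
qed

lemma ub_shift: "ub c d \<Longrightarrow> ub (ser_shift c u) d"
  unfolding ub_def[of "ser_shift c u"] by (auto simp: shift_sum)

lemma bnd_shift [simp]: "bnd c \<Longrightarrow> bnd (ser_shift c u)"
  by (meson bndI bnd_def ub_shift)

lemma gch_zero: "0 \<le> n \<Longrightarrow> n < int k \<Longrightarrow> (of_int n gchoose k :: real) = 0"
proof -
  assume a: "0 \<le> n" "n < int k"
  have "(of_int n gchoose k :: real) = of_nat (nat n) gchoose k" using a(1) by simp
  also have "\<dots> = of_nat (nat n choose k)" by (rule binomial_gbinomial[symmetric])
  also have "nat n choose k = 0" using a by (intro binomial_eq_0) linarith
  finally show ?thesis by simp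
qed

lemma vandermonde_CC:
  assumes "m \<le> i + j"
  shows "(\<Sum>p\<in>{m-j..i}. CC w i (i - p) * CC w j (j - (m - p))) = CC w (i + j) (i + j - m)"
proof -
  define K where "K = nat (i + j - m)"
  have "(\<Sum>p\<in>{m-j..i}. CC w i (i - p) * CC w j (j - (m - p)))
      = (\<Sum>q\<in>{0..K}. CC w i (int q) * CC w j (int (K - q)))"
  proof (rule sum.reindex_bij_witness[of _ "\<lambda>q. i - int q" "\<lambda>p. nat (i - p)"])
    fix p assume p: "p \<in> {m-j..i}"
    show "i - int (nat (i - p)) = p" using p by auto
    show "nat (i - p) \<in> {0..K}" using p assms by (auto simp: K_def)
    have "int (K - nat (i - p)) = j - (m - p)" using p assms by (auto simp: K_def)
    thus "CC w i (int (nat (i - p))) * CC w j (int (K - nat (i - p))) = CC w i (i - p) * CC w j (j - (m - p))"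
      using p by simp
  next
    fix q assume q: "q \<in> {0..K}"
    show "nat (i - (i - int q)) = q" by simp
    show "i - int q \<in> {m-j..i}" using q assms by (auto simp: K_def)
  qed
  also have "\<dots> = (\<Sum>q\<in>{0..K}. w ^ K * ((of_int i gchoose q) * (of_int j gchoose (K - q))))"
  proof (rule sum.cong[OF refl])
    fix q assume "q \<in> {0..K}"
    hence pw: "w ^ q * w ^ (K - q) = w ^ K" by (simp add: power_add[symmetric])
    show "CC w i (int q) * CC w j (int (K - q)) = w ^ K * ((of_int i gchoose q) * (of_int j gchoose (K - q)))"
      unfolding CC_def nat_int by (subst pw[symmetric]) (simp add: mult_ac)
  qed
  also have "\<dots> = w ^ K * ((of_int i + of_int j) gchoose K)"
    by (simp add: sum_distrib_left[symmetric] gbinomial_Vandermonde)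
  also have "\<dots> = CC w (i + j) (i + j - m)" by (simp add: CC_def K_def)
  finally show ?thesis .
qed

lemma shift_mult_pt:
  fixes f g :: "int \<Rightarrow> real"
  shows "(\<Sum>n\<in>{m..d+e}. (\<Sum>i\<in>{n-e..d}. f i * g (n-i)) * CC w n (n-m))
       = (\<Sum>p\<in>{m-e..d}. (\<Sum>i\<in>{p..d}. f i * CC w i (i-p)) * (\<Sum>j\<in>{m-p..e}. g j * CC w j (j-(m-p))))"
proof -
  define T where "T = (\<Sum>i\<in>{m-e..d}. \<Sum>j\<in>{m-i..e}. f i * g j * CC w (i+j) (i+j-m))"
  have "(\<Sum>n\<in>{m..d+e}. (\<Sum>i\<in>{n-e..d}. f i * g (n-i)) * CC w n (n-m))
      = (\<Sum>n\<in>{m..d+e}. \<Sum>i\<in>{n-e..d}. f i * g (n-i) * CC w n (n-m))"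
    by (simp add: sum_distrib_right)
  also have "\<dots> = (\<Sum>(n,i)\<in>Sigma {m..d+e} (\<lambda>n. {n-e..d}). f i * g (n-i) * CC w n (n-m))"
    by (rule sum.Sigma) auto
  also have "\<dots> = (\<Sum>(i,j)\<in>Sigma {m-e..d} (\<lambda>i. {m-i..e}). f i * g j * CC w (i+j) (i+j-m))"
    by (rule sum.reindex_bij_witness[of _ "\<lambda>(i,j). (i+j, i)" "\<lambda>(n,i). (i, n-i)"]) auto
  also have "\<dots> = T" unfolding T_def by (rule sum.Sigma[symmetric]) auto
  finally have L: "(\<Sum>n\<in>{m..d+e}. (\<Sum>i\<in>{n-e..d}. f i * g (n-i)) * CC w n (n-m)) = T" .
  have "(\<Sum>p\<in>{m-e..d}. (\<Sum>i\<in>{p..d}. f i * CC w i (i-p)) * (\<Sum>j\<in>{m-p..e}. g j * CC w j (j-(m-p))))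
      = (\<Sum>p\<in>{m-e..d}. \<Sum>i\<in>{p..d}. \<Sum>j\<in>{m-p..e}. f i * CC w i (i-p) * (g j * CC w j (j-(m-p))))"
    by (simp add: sum_product)
  also have "\<dots> = (\<Sum>p\<in>{m-e..d}. \<Sum>(i,j)\<in>Sigma {p..d} (\<lambda>i. {m-p..e}). f i * CC w i (i-p) * (g j * CC w j (j-(m-p))))"
    by (rule sum.cong[OF refl], rule sum.Sigma) auto
  also have "\<dots> = (\<Sum>(p,ij)\<in>Sigma {m-e..d} (\<lambda>p. Sigma {p..d} (\<lambda>i. {m-p..e})). (\<lambda>(i,j). f i * CC w i (i-p) * (g j * CC w j (j-(m-p)))) ij)"
    by (rule sum.Sigma) auto
  also have "\<dots> = (\<Sum>(i,jp)\<in>Sigma {m-e..d} (\<lambda>i. Sigma {m-i..e} (\<lambda>j. {m-j..i})). (\<lambda>(j,p). f i * g j * (CC w i (i-p) * CC w j (j-(m-p)))) jp)"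
    by (rule sum.reindex_bij_witness[of _ "\<lambda>(i,(j,p)). (p,(i,j))" "\<lambda>(p,(i,j)). (i,(j,p))"]) auto
  also have "\<dots> = (\<Sum>i\<in>{m-e..d}. \<Sum>(j,p)\<in>Sigma {m-i..e} (\<lambda>j. {m-j..i}). f i * g j * (CC w i (i-p) * CC w j (j-(m-p))))"
    by (rule sum.Sigma[symmetric]) auto
  also have "\<dots> = (\<Sum>i\<in>{m-e..d}. \<Sum>j\<in>{m-i..e}. \<Sum>p\<in>{m-j..i}. f i * g j * (CC w i (i-p) * CC w j (j-(m-p))))"
    by (rule sum.cong[OF refl], rule sum.Sigma[symmetric]) auto
  also have "\<dots> = T" unfolding T_def
    by (intro sum.cong refl) (simp add: sum_distrib_left[symmetric] vandermonde_CC)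
  finally show ?thesis using L by simp
qed

lemma shift_mult [simp]:
  assumes "bnd a" "bnd b"
  shows "ser_shift (ser_mult a b) u = ser_mult (ser_shift a u) (ser_shift b u)"
proof (intro ext)
  fix m s x t
  obtain d e where d: "ub a d" and e: "ub b e" using assms by (auto simp: bnd_def)
  show "ser_shift (ser_mult a b) u m s x t = ser_mult (ser_shift a u) (ser_shift b u) m s x t"
    by (simp add: shift_sum[OF ub_mult[OF d e]] mult_sum[OF d e] mult_sum[OF ub_shift[OF d] ub_shift[OF e]]
        shift_sum[OF d] shift_sum[OF e] shift_mult_pt[where f="\<lambda>i. a i s x t" and g="\<lambda>i. b i s x t" and w="- u s x t"])
qed

lemma shift_add [simp]:
  assumes "bnd a" "bnd b"
  shows "ser_shift (ser_add a b) u = ser_add (ser_shift a u) (ser_shift b u)"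
proof (intro ext)
  fix m s x t
  obtain d e where d: "ub a d" and e: "ub b e" using assms by (auto simp: bnd_def)
  have d': "ub a (max d e)" "ub b (max d e)" using d e by (auto intro: ub_mono)
  show "ser_shift (ser_add a b) u m s x t = ser_add (ser_shift a u) (ser_shift b u) m s x t"
    by (simp add: shift_sum[OF ub_add[OF d'(1) d'(2), simplified]] shift_sum[OF d'(1)] shift_sum[OF d'(2)]
          ser_add_def[of "ser_shift a u"] sum.distrib[symmetric] algebra_simps)
       (simp add: ser_add_def algebra_simps)
qed

lemma shift_diff [simp]:
  assumes "bnd a" "bnd b"
  shows "ser_shift (ser_diff a b) u = ser_diff (ser_shift a u) (ser_shift b u)"
proof (intro ext)
  fix m s x t
  obtain d e where d: "ub a d" and e: "ub b e" using assms by (auto simp: bnd_def)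
  have d': "ub a (max d e)" "ub b (max d e)" using d e by (auto intro: ub_mono)
  show "ser_shift (ser_diff a b) u m s x t = ser_diff (ser_shift a u) (ser_shift b u) m s x t"
    by (simp add: shift_sum[OF ub_diff[OF d'(1) d'(2), simplified]] shift_sum[OF d'(1)] shift_sum[OF d'(2)]
          ser_diff_def[of "ser_shift a u"] sum_subtractf[symmetric] algebra_simps)
       (simp add: ser_diff_def algebra_simps)
qed

lemma shift_smul [simp]:
  assumes "bnd a"
  shows "ser_shift (ser_smul c a) u = ser_smul c (ser_shift a u)"
proof (intro ext)
  fix m s x t
  obtain d where d: "ub a d" using assms by (auto simp: bnd_def)
  show "ser_shift (ser_smul c a) u m s x t = ser_smul c (ser_shift a u) m s x t"
    by (simp add: shift_sum[OF ub_smul[OF d]] shift_sum[OF d] ser_smul_def[of _ "ser_shift a u"] sum_distrib_left)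
       (simp add: ser_smul_def algebra_simps)
qed

lemma shift_const [simp]: "ser_shift (ser_const c) u = ser_const c"
proof (intro ext)
  fix m s x t
  have "ser_shift (ser_const c) u m s x t = (\<Sum>n\<in>{m..0}. ser_const c n s x t * CC (- u s x t) n (n - m))"
    by (rule shift_sum[OF ub_const])
  also have "\<dots> = ser_const c m s x t"
  proof (cases "m < 0")
    case True
    have "(\<Sum>n\<in>{m..0}. ser_const c n s x t * CC (- u s x t) n (n - m)) = 0"
      using True by (intro sum.neutral) (auto simp: ser_const_def CC_def gbinomial_0_left)
    thus ?thesis using True by (simp add: ser_const_def)
  next
    case False
    thus ?thesis by (cases "m = 0") (auto simp: ser_const_def CC_def)
  qed
  finally show "ser_shift (ser_const c) u m s x t = ser_const c m s x t" .
qed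

lemma ser_one_const: "ser_one = ser_const (\<lambda>s x t. 1)"
  by (auto simp: ser_one_def ser_const_def)

lemma shift_one [simp]: "ser_shift ser_one u = ser_one"
  by (simp add: ser_one_const)

lemma shift_pow [simp]: "bnd a \<Longrightarrow> ser_shift (ser_pow a n) u = ser_pow (ser_shift a u) n"
  by (induction n) auto

lemma shift_dk [simp]:
  assumes "bnd a"
  shows "ser_shift (ser_dk a) u = ser_dk (ser_shift a u)"
proof (intro ext)
  fix m s x t
  obtain d where d: "ub a d" using assms by (auto simp: bnd_def)
  define w where "w = - u s x t"
  have "ser_shift (ser_dk a) u m s x t = (\<Sum>n\<in>{m..d-1}. of_int (n+1) * a (n+1) s x t * CC w n (n - m))"
    by (subst shift_sum[OF ub_dk[OF d]]) (simp add: ser_dk_def w_def)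
  also have "\<dots> = (\<Sum>n\<in>{m+1..d}. of_int n * a n s x t * CC w (n - 1) (n - 1 - m))"
    by (rule sum.reindex_bij_witness[of _ "\<lambda>n. n - 1" "\<lambda>n. n + 1"]) auto
  also have "\<dots> = (\<Sum>n\<in>{m+1..d}. of_int (m + 1) * (a n s x t * CC w n (n - (m + 1))))"
  proof (rule sum.cong[OF refl])
    fix n assume n: "n \<in> {m+1..d}"
    define q where "q = nat (n - 1 - m)"
    have q1: "nat (n - (m+1)) = q" by (simp add: q_def)
    have "(of_int n - of_nat q) * (of_int n gchoose q) = (of_int n :: real) * ((of_int n - 1) gchoose q)"
      by (rule gbinomial_absorb_comp)
    moreover have "(of_int n - of_nat q :: real) = of_int (m + 1)" using n by (simp add: q_def)
    ultimately have "of_int (m+1) * (of_int n gchoose q) = (of_int n :: real) * (of_int (n - 1) gchoose q)"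
      by simp
    thus "of_int n * a n s x t * CC w (n - 1) (n - 1 - m) = of_int (m + 1) * (a n s x t * CC w n (n - (m + 1)))"
      unfolding CC_def q1 q_def[symmetric]
      by (metis (no_types, lifting) mult.assoc mult.left_commute)
  qed
  also have "\<dots> = ser_dk (ser_shift a u) m s x t"
    by (simp add: ser_dk_def shift_sum[OF d] w_def sum_distrib_left)
  finally show "ser_shift (ser_dk a) u m s x t = ser_dk (ser_shift a u) m s x t" .
qed

lemma proj_shift:
  assumes d: "ub X d"
  shows "proj_nonneg (ser_shift X u) = ser_add (ser_shift (proj_pos X) u) (ser_const (X 0))"
proof (intro ext)
  fix m s x t
  have d': "ub (proj_pos X) d" using d by (auto simp: ub_def proj_pos_def cf0_def)
  define w where "w = - u s x t"
  have R: "ser_add (ser_shift (proj_pos X) u) (ser_const (X 0)) m s x t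
        = (\<Sum>n\<in>{m..d}. (if n > 0 then X n s x t else 0) * CC w n (n - m)) + (if m = 0 then X 0 s x t else 0)"
    apply (simp only: ser_add_def)
    apply (subst shift_sum[OF d'])
    apply (simp add: ser_const_def proj_pos_def w_def)
    apply (auto simp: cf0_def intro!: sum.cong)
    done
  show "proj_nonneg (ser_shift X u) m s x t = ser_add (ser_shift (proj_pos X) u) (ser_const (X 0)) m s x t"
  proof (cases "m < 0")
    case True
    have "(\<Sum>n\<in>{m..d}. (if n > 0 then X n s x t else 0) * CC w n (n - m)) = 0"
    proof (intro sum.neutral ballI)
      fix n assume "n \<in> {m..d}"
      show "(if n > 0 then X n s x t else 0) * CC w n (n - m) = 0"
        using True by (auto simp: CC_def intro!: gch_zero)
    qed
    thus ?thesis using True R by (simp add: proj_nonneg_def cf0_def)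
  next
    case False
    show ?thesis
    proof (cases "m = 0")
      case True
      show ?thesis
      proof (cases "d < 0")
        case True
        thus ?thesis using R \<open>m = 0\<close> d by (simp add: proj_nonneg_def shift_sum[OF d] ubD)
      next
        case False
        have "{0..d} = insert 0 {1..d}" using False by auto
        hence "(\<Sum>n\<in>{0..d}. (if n > 0 then X n s x t else 0) * CC w n n) = (\<Sum>n\<in>{1..d}. X n s x t * CC w n n)"
          by (simp add: CC_def)
        moreover have "(\<Sum>n\<in>{0..d}. X n s x t * CC w n n) = X 0 s x t + (\<Sum>n\<in>{1..d}. X n s x t * CC w n n)"
          using \<open>{0..d} = insert 0 {1..d}\<close> by (simp add: CC_def)
        ultimately show ?thesis using R \<open>m = 0\<close> by (simp add: proj_nonneg_def shift_sum[OF d] w_def)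
      qed
    next
      case False
      hence "m > 0" using \<open>\<not> m < 0\<close> by simp
      thus ?thesis using R by (simp add: proj_nonneg_def shift_sum[OF d] w_def)
    qed
  qed
qed

definition ev3 :: "cf \<Rightarrow> real \<times> real \<times> (nat \<Rightarrow> real) \<Rightarrow> real" where
  "ev3 f p = f (fst p) (fst (snd p)) (snd (snd p))"

lemma DERIV_ln_abs: "(y::real) \<noteq> 0 \<Longrightarrow> DERIV (\<lambda>y. ln \<bar>y\<bar>) y :> 1 / y"
proof -
  assume y: "y \<noteq> 0"
  have eq: "(\<lambda>y::real. ln \<bar>y\<bar>) = (\<lambda>y. ln (y^2) / 2)"
  proof
    fix z :: real
    show "ln \<bar>z\<bar> = ln (z^2) / 2"
    proof (cases "z = 0")
      case False
      have "ln (z^2) = ln (\<bar>z\<bar>^2)" by simp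
      also have "\<dots> = 2 * ln \<bar>z\<bar>" using False by (subst ln_realpow) auto
      finally show ?thesis by simp
    qed simp
  qed
  have "DERIV (\<lambda>y. ln (y^2) / 2) y :> (1 / y^2) * (2 * y) / 2"
    by (rule DERIV_cdivide, rule DERIV_chain2[where f=ln], rule DERIV_ln_divide)
       (use y in \<open>auto intro!: derivative_eq_intros\<close>)
  moreover have "(1 / y^2) * (2 * y) / 2 = 1 / y" using y by (simp add: power2_eq_square field_simps)
  ultimately show ?thesis by (simp add: eq)
qed

locale dop =
  fixes pp :: "real \<Rightarrow> real \<Rightarrow> (nat \<Rightarrow> real) \<Rightarrow> real \<Rightarrow> real \<times> real \<times> (nat \<Rightarrow> real)"
    and bb :: "real \<Rightarrow> real \<Rightarrow> (nat \<Rightarrow> real) \<Rightarrow> real"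
  assumes base: "pp s x t (bb s x t) = (s, x, t)"
begin

definition D :: "cf \<Rightarrow> cf" where
  "D f = (\<lambda>s x t. deriv (\<lambda>y. ev3 f (pp s x t y)) (bb s x t))"
definition dif :: "cf \<Rightarrow> bool" where
  "dif f \<longleftrightarrow> (\<forall>s x t. (\<lambda>y. ev3 f (pp s x t y)) differentiable (at (bb s x t)))"
definition hasD :: "cf \<Rightarrow> cf \<Rightarrow> bool" where
  "hasD f g \<longleftrightarrow> (\<forall>s x t. ((\<lambda>y. ev3 f (pp s x t y)) has_real_derivative g s x t) (at (bb s x t)))"

lemma ev3_base: "ev3 f (pp s x t (bb s x t)) = f s x t"
  by (simp add: base ev3_def)

lemma hasD_dif: "hasD f g \<Longrightarrow> dif f"
  unfolding hasD_def dif_def using real_differentiable_def by blast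
lemma hasD_D: "hasD f g \<Longrightarrow> D f = g"
  unfolding hasD_def D_def by (intro ext) (simp add: DERIV_imp_deriv)
lemma dif_hasD: "dif f \<Longrightarrow> hasD f (D f)"
  unfolding hasD_def D_def dif_def by (simp add: DERIV_deriv_iff_real_differentiable)

lemma hasD_const: "hasD (\<lambda>s x t. c) (\<lambda>s x t. 0)"
  by (simp add: hasD_def ev3_def)
lemma hasD_add: "hasD f f' \<Longrightarrow> hasD g g' \<Longrightarrow> hasD (\<lambda>s x t. f s x t + g s x t) (\<lambda>s x t. f' s x t + g' s x t)"
  unfolding hasD_def ev3_def by (auto intro!: DERIV_add)
lemma hasD_diff: "hasD f f' \<Longrightarrow> hasD g g' \<Longrightarrow> hasD (\<lambda>s x t. f s x t - g s x t) (\<lambda>s x t. f' s x t - g' s x t)"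
  unfolding hasD_def ev3_def by (auto intro!: DERIV_diff)
lemma hasD_mult: "hasD f f' \<Longrightarrow> hasD g g' \<Longrightarrow>
   hasD (\<lambda>s x t. f s x t * g s x t) (\<lambda>s x t. f' s x t * g s x t + f s x t * g' s x t)"
proof -
  assume f: "hasD f f'" and g: "hasD g g'"
  show ?thesis unfolding hasD_def
  proof (intro allI)
    fix s x t
    have "((\<lambda>y. ev3 f (pp s x t y) * ev3 g (pp s x t y)) has_real_derivative
          f' s x t * ev3 g (pp s x t (bb s x t)) + ev3 f (pp s x t (bb s x t)) * g' s x t) (at (bb s x t))"
      using f g DERIV_mult'[of "\<lambda>y. ev3 f (pp s x t y)" "f' s x t" "bb s x t" UNIV "\<lambda>y. ev3 g (pp s x t y)" "g' s x t"]
      unfolding hasD_def by (simp add: add.commute mult.commute)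
    thus "((\<lambda>y. ev3 (\<lambda>s x t. f s x t * g s x t) (pp s x t y)) has_real_derivative
          f' s x t * g s x t + f s x t * g' s x t) (at (bb s x t))"
      by (simp add: ev3_base) (simp add: ev3_def)
  qed
qed
lemma hasD_cmult: "hasD f f' \<Longrightarrow> hasD (\<lambda>s x t. c * f s x t) (\<lambda>s x t. c * f' s x t)"
  using hasD_mult[OF hasD_const[of c]] by simp
lemma hasD_sum: "finite I \<Longrightarrow> (\<And>i. i \<in> I \<Longrightarrow> hasD (F i) (F' i)) \<Longrightarrow>
   hasD (\<lambda>s x t. \<Sum>i\<in>I. F i s x t) (\<lambda>s x t. \<Sum>i\<in>I. F' i s x t)"
  unfolding hasD_def ev3_def by (auto intro!: DERIV_sum)
lemma hasD_power: "hasD f f' \<Longrightarrow> hasD (\<lambda>s x t. f s x t ^ n) (\<lambda>s x t. of_nat n * (f' s x t * f s x t ^ (n - 1)))"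
proof -
  assume f: "hasD f f'"
  show ?thesis unfolding hasD_def
  proof (intro allI)
    fix s x t
    have "((\<lambda>y. ev3 f (pp s x t y) ^ n) has_real_derivative
          of_nat n * (f' s x t * ev3 f (pp s x t (bb s x t)) ^ (n - Suc 0))) (at (bb s x t))"
      using f unfolding hasD_def by (auto intro!: DERIV_power)
    thus "((\<lambda>y. ev3 (\<lambda>s x t. f s x t ^ n) (pp s x t y)) has_real_derivative
          of_nat n * (f' s x t * f s x t ^ (n - 1))) (at (bb s x t))"
      by (simp add: ev3_base) (simp add: ev3_def)
  qed
qed
lemma hasD_inverse: "hasD f f' \<Longrightarrow> (\<And>s x t. f s x t \<noteq> 0) \<Longrightarrow>
    hasD (\<lambda>s x t. 1 / f s x t) (\<lambda>s x t. - f' s x t / (f s x t)^2)"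
proof -
  assume f: "hasD f f'" and nz: "\<And>s x t. f s x t \<noteq> 0"
  show ?thesis unfolding hasD_def
  proof (intro allI)
    fix s x t
    have "((\<lambda>y. inverse (ev3 f (pp s x t y))) has_real_derivative
          - (f' s x t * inverse (ev3 f (pp s x t (bb s x t)) ^ Suc (Suc 0)))) (at (bb s x t))"
      using f nz unfolding hasD_def by (intro DERIV_inverse_fun) (auto simp: ev3_base)
    thus "((\<lambda>y. ev3 (\<lambda>s x t. 1 / f s x t) (pp s x t y)) has_real_derivative
          - f' s x t / (f s x t)^2) (at (bb s x t))"
      by (simp add: ev3_base divide_inverse power2_eq_square) (simp add: ev3_def)
  qed
qed
lemma hasD_ln_abs: "hasD f f' \<Longrightarrow> (\<And>s x t. f s x t \<noteq> 0) \<Longrightarrow>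
    hasD (\<lambda>s x t. ln \<bar>f s x t\<bar>) (\<lambda>s x t. f' s x t / f s x t)"
proof -
  assume f: "hasD f f'" and nz: "\<And>s x t. f s x t \<noteq> 0"
  show ?thesis unfolding hasD_def
  proof (intro allI)
    fix s x t
    have "((\<lambda>y. ln \<bar>ev3 f (pp s x t y)\<bar>) has_real_derivative
          1 / ev3 f (pp s x t (bb s x t)) * f' s x t) (at (bb s x t))"
      using f nz unfolding hasD_def
      by (intro DERIV_chain2[where f="\<lambda>y. ln \<bar>y\<bar>"] DERIV_ln_abs) (auto simp: ev3_base)
    thus "((\<lambda>y. ev3 (\<lambda>s x t. ln \<bar>f s x t\<bar>) (pp s x t y)) has_real_derivative
          f' s x t / f s x t) (at (bb s x t))"
      by (simp add: ev3_base) (simp add: ev3_def)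
  qed
qed

lemma hasD_cong: "hasD f g \<Longrightarrow> f = f2 \<Longrightarrow> g = g2 \<Longrightarrow> hasD f2 g2" by simp

end

lemma shift_deriv_pt:
  fixes f :: "int \<Rightarrow> real"
  shows "(\<Sum>n\<in>{m..d}. f n * ((of_int n gchoose nat (n-m)) * (of_nat (nat (n-m)) * (v * w ^ (nat (n-m) - 1)))))
       = v * (of_int (m+1) * (\<Sum>n\<in>{m+1..d}. f n * CC w n (n - (m+1))))"
proof -
  have "(\<Sum>n\<in>{m..d}. f n * ((of_int n gchoose nat (n-m)) * (of_nat (nat (n-m)) * (v * w ^ (nat (n-m) - 1)))))
      = (\<Sum>n\<in>{m+1..d}. f n * ((of_int n gchoose nat (n-m)) * (of_nat (nat (n-m)) * (v * w ^ (nat (n-m) - 1)))))"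
  proof (rule sum.mono_neutral_right)
    show "\<forall>i\<in>{m..d} - {m + 1..d}. f i * ((of_int i gchoose nat (i - m)) * (of_nat (nat (i - m)) * (v * w ^ (nat (i - m) - 1)))) = 0"
    proof
      fix i assume "i \<in> {m..d} - {m + 1..d}"
      hence "i = m" by auto
      thus "f i * ((of_int i gchoose nat (i - m)) * (of_nat (nat (i - m)) * (v * w ^ (nat (i - m) - 1)))) = 0" by simp
    qed
  qed auto
  also have "\<dots> = (\<Sum>n\<in>{m+1..d}. v * (of_int (m+1) * (f n * CC w n (n - (m+1)))))"
  proof (rule sum.cong[OF refl])
    fix n assume n: "n \<in> {m+1..d}"
    define k where "k = nat (n - (m+1))"
    have nk: "nat (n - m) = Suc k" using n by (simp add: k_def nat_eq_iff)
    have "(of_int n :: real) * (of_int n gchoose k) = of_nat k * (of_int n gchoose k) + of_nat (Suc k) * (of_int n gchoose (Suc k))"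
      by (rule gbinomial_mult_1)
    hence "of_nat (Suc k) * (of_int n gchoose (Suc k)) = (of_int n - of_nat k) * (of_int n gchoose k :: real)"
      by (simp add: algebra_simps)
    also have "(of_int n - of_nat k :: real) = of_int (m+1)" using n by (simp add: k_def)
    finally have key: "of_nat (Suc k) * (of_int n gchoose (Suc k)) = of_int (m+1) * (of_int n gchoose k :: real)" .
    show "f n * ((of_int n gchoose nat (n-m)) * (of_nat (nat (n-m)) * (v * w ^ (nat (n-m) - 1))))
        = v * (of_int (m+1) * (f n * CC w n (n - (m+1))))"
      unfolding nk CC_def k_def[symmetric] using key
      by (simp only: diff_Suc_1) (metis (no_types, lifting) mult.assoc mult.left_commute)
  qed
  also have "\<dots> = v * (of_int (m+1) * (\<Sum>n\<in>{m+1..d}. f n * CC w n (n - (m+1))))"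
    by (simp add: sum_distrib_left)
  finally show ?thesis .
qed

context dop begin

definition sD :: "ser \<Rightarrow> ser" where "sD a = (\<lambda>n. D (a n))"
definition sdif :: "ser \<Rightarrow> bool" where "sdif a \<longleftrightarrow> (\<forall>n. dif (a n))"

lemma D_zero: "D (\<lambda>s x t. 0) = (\<lambda>s x t. 0)" by (rule hasD_D[OF hasD_const])
lemma D_constf: "D (\<lambda>s x t. c) = (\<lambda>s x t. 0)" by (rule hasD_D[OF hasD_const])
lemma dif_const: "dif (\<lambda>s x t. c)" by (rule hasD_dif[OF hasD_const])

lemma hasD_uminus: "hasD f f' \<Longrightarrow> hasD (\<lambda>s x t. - f s x t) (\<lambda>s x t. - f' s x t)"
  using hasD_cmult[of f f' "-1"] by simp

lemma ub_sD: assumes "ub a d" shows "ub (sD a) d"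
proof -
  { fix n assume "n > d"
    hence "a n = (\<lambda>s x t. 0)" using assms by (intro ext) (simp add: ub_def)
    hence "sD a n = (\<lambda>s x t. 0)" by (simp add: sD_def D_zero) }
  thus ?thesis by (auto simp: ub_def)
qed

lemma bnd_sD [simp]: "bnd a \<Longrightarrow> bnd (sD a)"
  by (meson bndI bnd_def ub_sD)

lemma sdifD: "sdif a \<Longrightarrow> hasD (a n) (sD a n)"
  by (simp add: sdif_def sD_def dif_hasD)

lemma sdifI: "(\<And>n. hasD (a n) (b n)) \<Longrightarrow> sdif a \<and> sD a = b"
  by (auto simp: sdif_def sD_def intro: hasD_dif hasD_D)

lemma sD_mult_aux:
  assumes "bnd a" "bnd b" "sdif a" "sdif b"
  shows "sdif (ser_mult a b) \<and> sD (ser_mult a b) = ser_add (ser_mult (sD a) b) (ser_mult a (sD b))"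
proof (rule sdifI)
  fix n
  obtain d e where d: "ub a d" and e: "ub b e" using assms by (auto simp: bnd_def)
  have eq: "ser_mult a b n = (\<lambda>s x t. \<Sum>i\<in>{n-e..d}. a i s x t * b (n-i) s x t)"
    by (intro ext) (simp add: mult_sum[OF d e])
  have "hasD (ser_mult a b n) (\<lambda>s x t. \<Sum>i\<in>{n-e..d}. sD a i s x t * b (n-i) s x t + a i s x t * sD b (n-i) s x t)"
    unfolding eq by (intro hasD_sum hasD_mult sdifD assms) auto
  moreover have "(\<lambda>s x t. \<Sum>i\<in>{n-e..d}. sD a i s x t * b (n-i) s x t + a i s x t * sD b (n-i) s x t)
      = ser_add (ser_mult (sD a) b) (ser_mult a (sD b)) n"
    by (intro ext) (simp add: ser_add_def mult_sum[OF ub_sD[OF d] e] mult_sum[OF d ub_sD[OF e]] sum.distrib)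
  ultimately show "hasD (ser_mult a b n) (ser_add (ser_mult (sD a) b) (ser_mult a (sD b)) n)" by simp
qed

lemma sdif_mult [simp]: "bnd a \<Longrightarrow> bnd b \<Longrightarrow> sdif a \<Longrightarrow> sdif b \<Longrightarrow> sdif (ser_mult a b)"
  using sD_mult_aux by blast
lemma sD_mult: "bnd a \<Longrightarrow> bnd b \<Longrightarrow> sdif a \<Longrightarrow> sdif b \<Longrightarrow>
    sD (ser_mult a b) = ser_add (ser_mult (sD a) b) (ser_mult a (sD b))"
  using sD_mult_aux by blast

lemma sD_add_aux: "sdif a \<Longrightarrow> sdif b \<Longrightarrow> sdif (ser_add a b) \<and> sD (ser_add a b) = ser_add (sD a) (sD b)"
  by (rule sdifI) (unfold ser_add_def, intro hasD_add sdifD)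
lemma sdif_add [simp]: "sdif a \<Longrightarrow> sdif b \<Longrightarrow> sdif (ser_add a b)" using sD_add_aux by blast
lemma sD_add: "sdif a \<Longrightarrow> sdif b \<Longrightarrow> sD (ser_add a b) = ser_add (sD a) (sD b)" using sD_add_aux by blast

lemma sD_diff_aux: "sdif a \<Longrightarrow> sdif b \<Longrightarrow> sdif (ser_diff a b) \<and> sD (ser_diff a b) = ser_diff (sD a) (sD b)"
  by (rule sdifI) (unfold ser_diff_def, intro hasD_diff sdifD)
lemma sdif_diff [simp]: "sdif a \<Longrightarrow> sdif b \<Longrightarrow> sdif (ser_diff a b)" using sD_diff_aux by blast
lemma sD_diff: "sdif a \<Longrightarrow> sdif b \<Longrightarrow> sD (ser_diff a b) = ser_diff (sD a) (sD b)" using sD_diff_aux by blast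

lemma sD_smul_aux: "dif c \<Longrightarrow> sdif a \<Longrightarrow> sdif (ser_smul c a) \<and> sD (ser_smul c a) = ser_add (ser_smul (D c) a) (ser_smul c (sD a))"
  by (rule sdifI) (unfold ser_smul_def ser_add_def, intro hasD_mult sdifD dif_hasD)
lemma sdif_smul [simp]: "dif c \<Longrightarrow> sdif a \<Longrightarrow> sdif (ser_smul c a)" using sD_smul_aux by blast
lemma sD_smul: "dif c \<Longrightarrow> sdif a \<Longrightarrow> sD (ser_smul c a) = ser_add (ser_smul (D c) a) (ser_smul c (sD a))"
  using sD_smul_aux by blast

lemma sD_const_aux: "dif c \<Longrightarrow> sdif (ser_const c) \<and> sD (ser_const c) = ser_const (D c)"
proof (rule sdifI)
  fix n assume c: "dif c"
  show "hasD (ser_const c n) (ser_const (D c) n)"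
    by (cases "n = 0") (auto simp: ser_const_def c dif_hasD hasD_const)
qed
lemma sdif_const [simp]: "dif c \<Longrightarrow> sdif (ser_const c)" using sD_const_aux by blast
lemma sD_const: "dif c \<Longrightarrow> sD (ser_const c) = ser_const (D c)" using sD_const_aux by blast

lemma sdif_one [simp]: "sdif ser_one" by (simp add: ser_one_const dif_const)
lemma sD_one: "sD ser_one = ser_const (\<lambda>s x t. 0)" by (simp add: ser_one_const dif_const sD_const D_constf)

lemma sD_mono_aux: "sdif (ser_mono N) \<and> sD (ser_mono N) = ser_const (\<lambda>s x t. 0)"
proof (rule sdifI)
  fix n show "hasD (ser_mono N n) (ser_const (\<lambda>s x t. 0) n)"
    by (cases "n = N") (auto simp: ser_mono_def ser_const_def hasD_const)
qed
lemma sdif_mono [simp]: "sdif (ser_mono N)" using sD_mono_aux by blast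
lemma sD_mono: "sD (ser_mono N) = ser_const (\<lambda>s x t. 0)" using sD_mono_aux by blast

lemma sD_dk_aux: "sdif a \<Longrightarrow> sdif (ser_dk a) \<and> sD (ser_dk a) = ser_dk (sD a)"
  by (rule sdifI) (unfold ser_dk_def, intro hasD_cmult sdifD)
lemma sdif_dk [simp]: "sdif a \<Longrightarrow> sdif (ser_dk a)" using sD_dk_aux by blast
lemma sD_dk: "sdif a \<Longrightarrow> sD (ser_dk a) = ser_dk (sD a)" using sD_dk_aux by blast

lemma sdif_pow [simp]: "bnd a \<Longrightarrow> sdif a \<Longrightarrow> sdif (ser_pow a n)"
  by (induction n) auto

lemma FL_sD_pow:
  assumes "bnd a" "sdif a"
  shows "FL (sD (ser_pow a (Suc n))) s x t = of_nat (Suc n) * FL a s x t ^ n * FL (sD a) s x t"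
proof (induction n)
  case 0 thus ?case using assms by (simp add: sD_mult sD_one)
next
  case (Suc n)
  have e: "sD (ser_pow a (Suc (Suc n))) = ser_add (ser_mult (sD a) (ser_pow a (Suc n))) (ser_mult a (sD (ser_pow a (Suc n))))"
    using assms by (simp only: ser_pow.simps(2)[of a "Suc n"]) (rule sD_mult, auto)
  have "FL (sD (ser_pow a (Suc (Suc n)))) s x t
      = FL (sD a) s x t * FL a s x t ^ Suc n + FL a s x t * FL (sD (ser_pow a (Suc n))) s x t"
    using assms by (simp add: e del: ser_pow.simps)
  also have "\<dots> = of_nat (Suc (Suc n)) * FL a s x t ^ Suc n * FL (sD a) s x t"
    unfolding Suc.IH by (simp add: algebra_simps del: ser_pow.simps)
  finally show ?case .
qed

lemma sD_shift_aux:
  assumes u: "dif u" and a: "bnd a" "sdif a"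
  shows "sdif (ser_shift a u) \<and>
         sD (ser_shift a u) = ser_diff (ser_shift (sD a) u) (ser_smul (D u) (ser_dk (ser_shift a u)))"
proof (rule sdifI)
  fix m
  obtain d where d: "ub a d" using a by (auto simp: bnd_def)
  have eq: "ser_shift a u m = (\<lambda>s x t. \<Sum>n\<in>{m..d}. a n s x t * ((of_int n gchoose nat (n-m)) * (- u s x t) ^ nat (n-m)))"
    by (intro ext) (simp add: shift_sum[OF d] CC_def)
  have hu: "hasD (\<lambda>s x t. - u s x t) (\<lambda>s x t. - D u s x t)" by (intro hasD_uminus dif_hasD u)
  have H: "hasD (ser_shift a u m) (\<lambda>s x t. \<Sum>n\<in>{m..d}. sD a n s x t * ((of_int n gchoose nat (n-m)) * (- u s x t) ^ nat (n-m))
           + a n s x t * ((of_int n gchoose nat (n-m)) * (of_nat (nat (n-m)) * (- D u s x t * (- u s x t) ^ (nat (n-m) - 1)))))"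
    unfolding eq
    by (intro hasD_sum hasD_mult sdifD a hasD_cmult hasD_power hu) auto
  have "(\<lambda>s x t. \<Sum>n\<in>{m..d}. sD a n s x t * ((of_int n gchoose nat (n-m)) * (- u s x t) ^ nat (n-m))
           + a n s x t * ((of_int n gchoose nat (n-m)) * (of_nat (nat (n-m)) * (- D u s x t * (- u s x t) ^ (nat (n-m) - 1)))))
      = ser_diff (ser_shift (sD a) u) (ser_smul (D u) (ser_dk (ser_shift a u))) m"
  proof (intro ext)
    fix s x t
    show "(\<Sum>n\<in>{m..d}. sD a n s x t * ((of_int n gchoose nat (n-m)) * (- u s x t) ^ nat (n-m))
           + a n s x t * ((of_int n gchoose nat (n-m)) * (of_nat (nat (n-m)) * (- D u s x t * (- u s x t) ^ (nat (n-m) - 1)))))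
        = ser_diff (ser_shift (sD a) u) (ser_smul (D u) (ser_dk (ser_shift a u))) m s x t"
      unfolding sum.distrib
      apply (subst shift_deriv_pt[where f="\<lambda>n. a n s x t"])
      apply (simp add: ser_diff_def ser_smul_def ser_dk_def shift_sum[OF ub_sD[OF d]] shift_sum[OF d] CC_def)
      done
  qed
  thus "hasD (ser_shift a u m) (ser_diff (ser_shift (sD a) u) (ser_smul (D u) (ser_dk (ser_shift a u))) m)"
    using H by simp
qed

lemma sdif_shift [simp]: "dif u \<Longrightarrow> bnd a \<Longrightarrow> sdif a \<Longrightarrow> sdif (ser_shift a u)"
  using sD_shift_aux by blast
lemma sD_shift: "dif u \<Longrightarrow> bnd a \<Longrightarrow> sdif a \<Longrightarrow>
   sD (ser_shift a u) = ser_diff (ser_shift (sD a) u) (ser_smul (D u) (ser_dk (ser_shift a u)))"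
  using sD_shift_aux by blast

end

fun LamJ :: "ser \<Rightarrow> nat \<Rightarrow> ser" where
  "LamJ Q 0 = ser_const (\<lambda>s x t. 0)"
| "LamJ Q (Suc J) = ser_add (LamJ Q J) (ser_smul (\<lambda>s x t. (-1)^(J+2) / real (Suc J)) (ser_pow Q (Suc J)))"

definition Lam :: "ser \<Rightarrow> ser" where
  "Lam Q = (\<lambda>n s x t. if n < 0 then (\<Sum>j\<in>{1..nat (- n)}. (-1) ^ (j + 1) / real j * ser_pow Q j n s x t) else 0)"

lemma LamJ_nth: "LamJ Q J n s x t = (\<Sum>j\<in>{1..J}. (-1) ^ (j + 1) / real j * ser_pow Q j n s x t)"
proof (induction J)
  case 0 thus ?case by (simp add: ser_const_def)
next
  case (Suc J)
  have "{1..Suc J} = insert (Suc J) {1..J}" by auto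
  thus ?case using Suc by (simp add: ser_add_def ser_smul_def del: ser_pow.simps)
qed

lemma ub_LamJ: "ub Q (-1) \<Longrightarrow> ub (LamJ Q J) (-1)"
proof (induction J)
  case 0 thus ?case by (auto simp: ub_def ser_const_def)
next
  case (Suc J)
  have "ub (ser_pow Q (Suc J)) (int (Suc J) * -1)" by (rule ub_pow[OF Suc.prems])
  hence "ub (ser_pow Q (Suc J)) (-1)" by (rule ub_mono) simp
  hence "ub (ser_add (LamJ Q J) (ser_smul c (ser_pow Q (Suc J)))) (-1)" for c
    using ub_add[OF Suc.IH[OF Suc.prems] ub_smul] by fastforce
  thus ?case by (simp only: LamJ.simps)
qed

lemma pow_zero_below: "ub Q (-1) \<Longrightarrow> - int j < m \<Longrightarrow> ser_pow Q j m s x t = 0"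
  using ub_pow[of Q "-1" j] by (auto simp: ub_def)

lemma Lam_agree:
  assumes Q: "ub Q (-1)" and m: "- int J \<le> m"
  shows "Lam Q m = LamJ Q J m"
proof (intro ext)
  fix s x t
  show "Lam Q m s x t = LamJ Q J m s x t"
  proof (cases "m < 0")
    case True
    have "(\<Sum>j\<in>{1..J}. (-1) ^ (j + 1) / real j * ser_pow Q j m s x t)
        = (\<Sum>j\<in>{1..nat (-m)}. (-1) ^ (j + 1) / real j * ser_pow Q j m s x t)"
    proof (rule sum.mono_neutral_right)
      show "{1..nat (- m)} \<subseteq> {1..J}" using m by auto
      show "\<forall>i\<in>{1..J} - {1..nat (- m)}. (-1) ^ (i + 1) / real i * ser_pow Q i m s x t = 0"
        using True by (auto intro!: pow_zero_below[OF Q])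
    qed auto
    thus ?thesis using True by (simp add: Lam_def LamJ_nth)
  next
    case False
    have "(\<Sum>j\<in>{1..J}. (-1) ^ (j + 1) / real j * ser_pow Q j m s x t) = 0"
      using False by (auto intro!: sum.neutral pow_zero_below[OF Q])
    thus ?thesis using False by (simp add: Lam_def LamJ_nth)
  qed
qed

lemma ub_Lam: "ub (Lam Q) (-1)" by (auto simp: ub_def Lam_def)

lemma const_coeff_fls: "fls_const ((-1)^(J+2) / real (Suc J)) * (of_nat (Suc J) * (X :: real fls)) = (-1)^J * X"
proof -
  have "fls_const ((-1)^(J+2) / real (Suc J)) * of_nat (Suc J) = fls_const ((-1)^(J+2) / real (Suc J) * real (Suc J))"
    by (simp only: fls_of_nat fls_const_mult_const)
  also have "(-1)^(J+2) / real (Suc J) * real (Suc J) = (-1)^J" by simp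
  also have "fls_const ((-1::real)^J) = (-1)^J" by (simp add: fls_const_power)
  finally show ?thesis by (simp add: mult.assoc[symmetric])
qed

locale lder =
  fixes Dop :: "ser \<Rightarrow> ser" and ok :: "ser \<Rightarrow> bool"
  assumes Dop_mult: "bnd a \<Longrightarrow> bnd b \<Longrightarrow> ok a \<Longrightarrow> ok b \<Longrightarrow> Dop (ser_mult a b) = ser_add (ser_mult (Dop a) b) (ser_mult a (Dop b))"
    and ok_mult: "bnd a \<Longrightarrow> bnd b \<Longrightarrow> ok a \<Longrightarrow> ok b \<Longrightarrow> ok (ser_mult a b)"
    and Dop_add: "ok a \<Longrightarrow> ok b \<Longrightarrow> Dop (ser_add a b) = ser_add (Dop a) (Dop b)"
    and ok_add: "ok a \<Longrightarrow> ok b \<Longrightarrow> ok (ser_add a b)"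
    and Dop_smulc: "ok a \<Longrightarrow> Dop (ser_smul (\<lambda>s x t. c) a) = ser_smul (\<lambda>s x t. c) (Dop a)"
    and ok_smulc: "ok a \<Longrightarrow> ok (ser_smul (\<lambda>s x t. c) a)"
    and Dop_one: "Dop ser_one = ser_const (\<lambda>s x t. 0)"
    and ok_one: "ok ser_one"
    and Dop_const0: "Dop (ser_const (\<lambda>s x t. 0)) = ser_const (\<lambda>s x t. 0)"
    and ok_const0: "ok (ser_const (\<lambda>s x t. 0))"
    and ub_Dop: "ub a d \<Longrightarrow> ub (Dop a) d"
    and Dop_local: "(\<And>m. m \<ge> n \<Longrightarrow> X m = Y m) \<Longrightarrow> m \<ge> n \<Longrightarrow> Dop X m = Dop Y m"
begin

lemma bnd_Dop [simp]: "bnd a \<Longrightarrow> bnd (Dop a)"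
  by (meson bndI bnd_def ub_Dop)

lemma ok_pow: "bnd a \<Longrightarrow> ok a \<Longrightarrow> ok (ser_pow a n)"
proof (induction n)
  case 0 show ?case by (simp add: ok_one)
next
  case (Suc n)
  have "ok (ser_pow a n)" by (rule Suc.IH[OF Suc.prems])
  have "ok (ser_mult a (ser_pow a n))"
    by (rule ok_mult) (fact Suc.prems(1), rule bnd_pow, fact Suc.prems(1), fact Suc.prems(2), fact)
  thus ?case by (simp only: ser_pow.simps)
qed

lemma FL_Dop_pow:
  assumes "bnd a" "ok a"
  shows "FL (Dop (ser_pow a (Suc n))) s x t = of_nat (Suc n) * FL a s x t ^ n * FL (Dop a) s x t"
proof (induction n)
  case 0 thus ?case using assms by (simp add: Dop_mult ok_one Dop_one)
next
  case (Suc n)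
  have e: "Dop (ser_pow a (Suc (Suc n))) = ser_add (ser_mult (Dop a) (ser_pow a (Suc n))) (ser_mult a (Dop (ser_pow a (Suc n))))"
    using assms by (simp only: ser_pow.simps(2)[of a "Suc n"]) (rule Dop_mult, simp_all add: assms ok_pow[OF assms] del: ser_pow.simps)
  have "FL (Dop (ser_pow a (Suc (Suc n)))) s x t
      = FL (Dop a) s x t * FL a s x t ^ Suc n + FL a s x t * FL (Dop (ser_pow a (Suc n))) s x t"
    using assms by (simp add: e del: ser_pow.simps)
  also have "\<dots> = of_nat (Suc (Suc n)) * FL a s x t ^ Suc n * FL (Dop a) s x t"
    unfolding Suc.IH by (simp add: algebra_simps del: ser_pow.simps)
  finally show ?case .
qed

lemma ok_LamJ: "bnd Q \<Longrightarrow> ok Q \<Longrightarrow> ok (LamJ Q J)"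
  by (induction J) (auto intro!: ok_add ok_smulc ok_pow ok_const0 simp del: ser_pow.simps)

lemma bnd_LamJ: "bnd Q \<Longrightarrow> bnd (LamJ Q J)"
  by (induction J) (auto simp del: ser_pow.simps)

lemma geo:
  assumes "bnd Q" "ok Q"
  shows "FL (ser_mult (ser_add ser_one Q) (Dop (LamJ Q J))) s x t
       = FL (Dop Q) s x t - (- FL Q s x t) ^ J * FL (Dop Q) s x t"
proof (induction J)
  case 0 thus ?case using assms by (simp add: Dop_const0)
next
  case (Suc J)
  define q where "q = FL Q s x t"
  define d where "d = FL (Dop Q) s x t"
  define S where "S = FL (Dop (LamJ Q J)) s x t"
  have IH: "(1 + q) * S = d - (- q) ^ J * d" using Suc.IH assms bnd_LamJ[OF assms(1)]
    by (simp add: q_def d_def S_def)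
  have "FL (Dop (LamJ Q (Suc J))) s x t
       = S + fls_const ((-1)^(J+2) / real (Suc J)) * FL (Dop (ser_pow Q (Suc J))) s x t"
    using assms by (simp add: Dop_add Dop_smulc ok_LamJ ok_smulc ok_pow bnd_LamJ S_def del: ser_pow.simps)
  also have "\<dots> = S + (-1)^J * (q ^ J * d)"
    unfolding FL_Dop_pow[OF assms] q_def[symmetric] d_def[symmetric]
    using const_coeff_fls[of J "q ^ J * d"] by (simp add: mult.assoc)
  finally have "FL (Dop (LamJ Q (Suc J))) s x t = S + (-1)^J * (q ^ J * d)" .
  hence "FL (ser_mult (ser_add ser_one Q) (Dop (LamJ Q (Suc J)))) s x t = (1 + q) * (S + (-1)^J * (q ^ J * d))"
    using assms bnd_LamJ[OF assms(1)] by (simp add: q_def del: LamJ.simps)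
  also have "\<dots> = (1 + q) * S + (1 + q) * ((-1)^J * (q ^ J * d))" by (simp add: algebra_simps)
  also have "\<dots> = d - (- q) ^ Suc J * d"
    unfolding IH by (simp add: power_minus' algebra_simps power_mult_distrib)
  finally show ?case by (simp add: q_def d_def)
qed

lemma log_key:
  assumes Q: "ub Q (-1)" "ok Q"
  shows "ser_mult (ser_add ser_one Q) (Dop (Lam Q)) = Dop Q"
proof (intro ext)
  fix n s x t
  have bQ: "bnd Q" by (rule bndI[OF Q(1)])
  define J where "J = nat (- n) + 1"
  have nJ: "- int J \<le> n" "- int J - 1 < n" by (auto simp: J_def)
  have ub1: "ub (ser_add ser_one Q) 0" using ub_add[OF ub_one Q(1)] by simp
  have agree: "\<And>m. m \<ge> n \<Longrightarrow> Dop (Lam Q) m = Dop (LamJ Q J) m"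
    by (rule Dop_local[where n=n]) (use nJ in \<open>auto intro!: Lam_agree[OF Q(1)]\<close>)
  have "ser_mult (ser_add ser_one Q) (Dop (Lam Q)) n s x t
      = ser_mult (ser_add ser_one Q) (Dop (LamJ Q J)) n s x t"
    by (simp add: mult_sum[OF ub1 ub_Dop[OF ub_Lam]] mult_sum[OF ub1 ub_Dop[OF ub_LamJ[OF Q(1)]]] agree)
  also have "\<dots> = FL (ser_mult (ser_add ser_one Q) (Dop (LamJ Q J))) s x t $$ (-n)"
    using bQ bnd_LamJ[OF bQ] by (simp add: FL_nth del: FL_mult)
  also have "\<dots> = (FL (Dop Q) s x t - (- FL Q s x t) ^ J * FL (Dop Q) s x t) $$ (-n)"
    by (simp only: geo[OF bQ Q(2)])
  also have "(- FL Q s x t) ^ J * FL (Dop Q) s x t = FL (ser_mult (ser_pow (ser_smul (\<lambda>s x t. -1) Q) J) (Dop Q)) s x t"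
    using bQ by (simp add: power_mult_distrib)
  also have "(FL (Dop Q) s x t - FL (ser_mult (ser_pow (ser_smul (\<lambda>s x t. -1) Q) J) (Dop Q)) s x t) $$ (-n)
      = Dop Q n s x t - ser_mult (ser_pow (ser_smul (\<lambda>s x t. -1) Q) J) (Dop Q) n s x t"
    using bQ by (simp add: FL_nth del: FL_mult FL_pow FL_smul)
  also have "ser_mult (ser_pow (ser_smul (\<lambda>s x t. -1) Q) J) (Dop Q) n s x t = 0"
  proof -
    have "ub (ser_pow (ser_smul (\<lambda>s x t. -1) Q) J) (int J * -1)" by (rule ub_pow[OF ub_smul[OF Q(1)]])
    from ub_mult[OF this ub_Dop[OF Q(1)]] show ?thesis using nJ by (auto simp: ub_def)
  qed
  finally show "ser_mult (ser_add ser_one Q) (Dop (Lam Q)) n s x t = Dop Q n s x t" by simp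
qed

end

lemma dk_mult:
  assumes "bnd a" "bnd b"
  shows "ser_dk (ser_mult a b) = ser_add (ser_mult (ser_dk a) b) (ser_mult a (ser_dk b))"
  by (rule ser_eqI) (use assms in \<open>simp_all add: algebra_simps\<close>)

lemma dk_add: "ser_dk (ser_add a b) = ser_add (ser_dk a) (ser_dk b)"
  by (auto simp: ser_dk_def ser_add_def algebra_simps)
lemma dk_diff: "ser_dk (ser_diff a b) = ser_diff (ser_dk a) (ser_dk b)"
  by (auto simp: ser_dk_def ser_diff_def algebra_simps)
lemma dk_smul: "ser_dk (ser_smul c a) = ser_smul c (ser_dk a)"
  by (auto simp: ser_dk_def ser_smul_def algebra_simps)
lemma dk_const: "ser_dk (ser_const c) = ser_const (\<lambda>s x t. 0)"
  by (intro ext) (auto simp: ser_dk_def ser_const_def)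
lemma dk_one: "ser_dk ser_one = ser_const (\<lambda>s x t. 0)"
  by (simp add: ser_one_const dk_const)
lemma dk_mono: "ser_dk (ser_mono N) = ser_smul (\<lambda>s x t. of_int N) (ser_mono (N - 1))"
  by (auto simp: ser_dk_def ser_mono_def ser_smul_def)

interpretation dkl: lder ser_dk "\<lambda>_. True"
proof
  show "\<And>a d. ub a d \<Longrightarrow> ub (ser_dk a) d" using ub_dk ub_mono by fastforce
  show "\<And>n X Y m. (\<And>m. n \<le> m \<Longrightarrow> X m = Y m) \<Longrightarrow> n \<le> m \<Longrightarrow> ser_dk X m = ser_dk Y m"
    by (simp add: ser_dk_def)
qed (simp_all add: dk_mult dk_add dk_smul dk_one dk_const)

lemma smul_zero_add: "ser_add (ser_smul (\<lambda>s x t. 0) a) b = b"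
  by (simp add: ser_add_def ser_smul_def)

sublocale dop \<subseteq> sdl: lder sD sdif
proof
  show "\<And>a d. ub a d \<Longrightarrow> ub (sD a) d" by (rule ub_sD)
  show "\<And>n X Y m. (\<And>m. n \<le> m \<Longrightarrow> X m = Y m) \<Longrightarrow> n \<le> m \<Longrightarrow> sD X m = sD Y m"
    by (simp add: sD_def)
  show "\<And>a c. sdif a \<Longrightarrow> sD (ser_smul (\<lambda>s x t. c) a) = ser_smul (\<lambda>s x t. c) (sD a)"
    by (simp add: sD_smul dif_const D_constf smul_zero_add)
  show "sD (ser_const (\<lambda>s x t. 0)) = ser_const (\<lambda>s x t. 0)" by (simp add: sD_const dif_const D_zero)
qed (simp_all add: sD_mult sD_add sD_one dif_const)

lemma ub_logQ: "ub (logQ N P) (-1)" by (auto simp: ub_def logQ_def)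
lemma bnd_logQ [simp]: "bnd (logQ N P)" by (rule bndI[OF ub_logQ])

lemma P_decomp:
  assumes P: "ub P (int N)" and nz: "\<And>s x t. P (int N) s x t \<noteq> 0"
  shows "P = ser_mult (ser_smul (P (int N)) (ser_mono (int N))) (ser_add ser_one (logQ N P))"
proof (intro ext)
  fix n s x t
  have u1: "ub (ser_smul (P (int N)) (ser_mono (int N))) (int N)" by (rule ub_smul[OF ub_mono_ser])
  have u2: "ub (ser_add ser_one (logQ N P)) 0" using ub_add[OF ub_one ub_logQ] by simp
  have "ser_mult (ser_smul (P (int N)) (ser_mono (int N))) (ser_add ser_one (logQ N P)) n s x t
      = (\<Sum>i\<in>{n..int N}. (if i = int N then P (int N) s x t else 0) * ser_add ser_one (logQ N P) (n - i) s x t)"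
    by (subst mult_sum[OF u1 u2]) (auto simp: ser_smul_def ser_mono_def intro!: sum.cong)
  also have "\<dots> = (if n \<le> int N then P (int N) s x t * ser_add ser_one (logQ N P) (n - int N) s x t else 0)"
    by (simp add: if_distrib[of "\<lambda>c. c * _"] sum.delta' cong: if_cong)
  also have "\<dots> = P n s x t"
    using nz[of s x t] ubD[OF P, of n s x t] by (auto simp: ser_add_def ser_one_def logQ_def)
  finally show "P n s x t = ser_mult (ser_smul (P (int N)) (ser_mono (int N))) (ser_add ser_one (logQ N P)) n s x t" by simp
qed

lemma logP_decomp: "logP_ser N P = ser_add (ser_const (\<lambda>s x t. ln \<bar>P (int N) s x t\<bar>)) (Lam (logQ N P))"
  by (intro ext) (auto simp: logP_ser_def ser_add_def ser_const_def Lam_def)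

lemma dk_logP_decomp: "dk_logP N P = ser_add (ser_smul (\<lambda>s x t. real N) (ser_mono (-1))) (ser_dk (Lam (logQ N P)))"
  unfolding dk_logP_def logP_decomp dk_add dk_const
  by (intro ext) (simp add: ser_add_def ser_smul_def ser_mono_def ser_const_def)

lemma dk_log:
  assumes P: "ub P (int N)" and nz: "\<And>s x t. P (int N) s x t \<noteq> 0"
  shows "ser_mult P (dk_logP N P) = ser_dk P"
proof -
  define Q where "Q = logQ N P"
  define p0 where "p0 = P (int N)"
  have Pd: "P = ser_mult (ser_smul p0 (ser_mono (int N))) (ser_add ser_one Q)"
    unfolding Q_def p0_def by (rule P_decomp[OF P nz])
  have uQ: "ub Q (-1)" unfolding Q_def by (rule ub_logQ)
  have bQ: "bnd Q" using bndI[OF uQ] .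
  have key: "ser_mult (ser_add ser_one Q) (ser_dk (Lam Q)) = ser_dk Q"
    by (rule dkl.log_key[OF uQ]) simp
  have bL: "bnd (Lam Q)" by (rule bndI[OF ub_Lam])
  have dl: "dk_logP N P = ser_add (ser_smul (\<lambda>s x t. real N) (ser_mono (-1))) (ser_dk (Lam Q))"
    unfolding Q_def by (rule dk_logP_decomp)
  have mm: "FL (ser_mono (int N)) s x t * FL (ser_mono (-1)) s x t = FL (ser_mono (int N - 1)) s x t" for s x t
    using mono_mult[of "int N" "-1"] by (metis FL_mult bnd_mono diff_minus_eq_add minus_minus)
  have k: "(1 + FL Q s x t) * FL (ser_dk (Lam Q)) s x t = FL (ser_dk Q) s x t" for s x t
    using arg_cong[OF key, of "\<lambda>a. FL a s x t"] bQ bL by simp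
  show ?thesis
  proof (rule ser_eqI)
    show "bnd (ser_mult P (dk_logP N P))" using bndI[OF P] dl bQ bL by simp
    show "bnd (ser_dk P)" using bndI[OF P] by simp
    fix s x t
    have "FL (ser_mult P (dk_logP N P)) s x t
        = fls_const (p0 s x t) * FL (ser_mono (int N)) s x t * (1 + FL Q s x t) *
          (fls_const (real N) * FL (ser_mono (-1)) s x t + FL (ser_dk (Lam Q)) s x t)"
      unfolding dl unfolding Pd using bQ bL by (simp del: FL_dk)
    also have "\<dots> = fls_const (p0 s x t) * fls_const (real N) * (FL (ser_mono (int N)) s x t * FL (ser_mono (-1)) s x t) * (1 + FL Q s x t)
         + fls_const (p0 s x t) * FL (ser_mono (int N)) s x t * ((1 + FL Q s x t) * FL (ser_dk (Lam Q)) s x t)"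
      by (simp add: algebra_simps del: fls_const_mult_const)
    also have "\<dots> = fls_const (p0 s x t) * fls_const (real N) * FL (ser_mono (int N - 1)) s x t * (1 + FL Q s x t)
         + fls_const (p0 s x t) * FL (ser_mono (int N)) s x t * FL (ser_dk Q) s x t"
      by (simp only: mm k)
    also have "\<dots> = FL (ser_dk P) s x t"
      unfolding Pd using bQ
      by (simp add: dk_mult dk_smul dk_add dk_one dk_mono del: FL_dk)
    finally show "FL (ser_mult P (dk_logP N P)) s x t = FL (ser_dk P) s x t" .
  qed
qed

context dop begin

lemma hasD_div: "hasD f f' \<Longrightarrow> hasD g g' \<Longrightarrow> (\<And>s x t. g s x t \<noteq> 0) \<Longrightarrow>
    hasD (\<lambda>s x t. f s x t / g s x t) (\<lambda>s x t. f' s x t / g s x t - f s x t * g' s x t / (g s x t)^2)"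
proof -
  assume f: "hasD f f'" and g: "hasD g g'" and nz: "\<And>s x t. g s x t \<noteq> 0"
  show ?thesis
    by (rule hasD_cong[OF hasD_mult[OF f hasD_inverse[OF g nz]]]) (auto simp: field_simps)
qed

lemma sdif_logQ: assumes "sdif P" "\<And>s x t. P (int N) s x t \<noteq> 0" shows "sdif (logQ N P)"
  unfolding sdif_def
proof
  fix j
  have e: "logQ N P j = (if j < 0 then (\<lambda>s x t. P (int N + j) s x t / P (int N) s x t) else (\<lambda>s x t. 0))"
    by (auto simp: logQ_def)
  show "dif (logQ N P j)"
    unfolding e using assms by (auto intro!: hasD_dif[OF hasD_div] sdifD dif_const)
qed

lemma sdif_Lam: assumes "bnd Q" "sdif Q" shows "sdif (Lam Q)"
  unfolding sdif_def
proof
  fix n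
  have e: "Lam Q n = (if n < 0 then (\<lambda>s x t. \<Sum>j\<in>{1..nat (- n)}. (-1) ^ (j + 1) / real j * ser_pow Q j n s x t) else (\<lambda>s x t. 0))"
    by (auto simp: Lam_def)
  show "dif (Lam Q n)"
  proof (cases "n < 0")
    case True
    have "hasD (\<lambda>s x t. \<Sum>j\<in>{1..nat (- n)}. (-1) ^ (j + 1) / real j * ser_pow Q j n s x t)
               (\<lambda>s x t. \<Sum>j\<in>{1..nat (- n)}. (-1) ^ (j + 1) / real j * sD (ser_pow Q j) n s x t)"
      by (rule hasD_sum) (simp, rule hasD_cmult, rule sdifD, rule sdif_pow[OF assms])
    from hasD_dif[OF this] show ?thesis unfolding e using True by simp
  next
    case False thus ?thesis unfolding e by (simp add: dif_const)
  qed
qed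

lemma sD_log:
  assumes P: "ub P (int N)" and nz: "\<And>s x t. P (int N) s x t \<noteq> 0" and sP: "sdif P"
  shows "sdif (logP_ser N P) \<and> ser_mult P (sD (logP_ser N P)) = sD P"
proof -
  define Q where "Q = logQ N P"
  define p0 where "p0 = P (int N)"
  have Pd: "P = ser_mult (ser_smul p0 (ser_mono (int N))) (ser_add ser_one Q)"
    unfolding Q_def p0_def by (rule P_decomp[OF P nz])
  have uQ: "ub Q (-1)" unfolding Q_def by (rule ub_logQ)
  have bQ: "bnd Q" using bndI[OF uQ] .
  have sQ: "sdif Q" unfolding Q_def by (rule sdif_logQ[OF sP nz])
  have bL: "bnd (Lam Q)" by (rule bndI[OF ub_Lam])
  have sL: "sdif (Lam Q)" by (rule sdif_Lam[OF bQ sQ])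
  have dp: "dif p0" using sP unfolding p0_def sdif_def by blast
  have nz': "\<And>s x t. p0 s x t \<noteq> 0" unfolding p0_def by (rule nz)
  have hl: "hasD (\<lambda>s x t. ln \<bar>p0 s x t\<bar>) (\<lambda>s x t. D p0 s x t / p0 s x t)"
    by (rule hasD_ln_abs[OF dif_hasD[OF dp] nz'])
  have ld: "logP_ser N P = ser_add (ser_const (\<lambda>s x t. ln \<bar>p0 s x t\<bar>)) (Lam Q)"
    unfolding Q_def p0_def by (rule logP_decomp)
  have sl: "sdif (logP_ser N P)" unfolding ld using sL hasD_dif[OF hl] by simp
  have sDl: "sD (logP_ser N P) = ser_add (ser_const (\<lambda>s x t. D p0 s x t / p0 s x t)) (sD (Lam Q))"
    unfolding ld using sL hasD_dif[OF hl] by (simp add: sD_add sD_const hasD_D[OF hl])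
  have key: "ser_mult (ser_add ser_one Q) (sD (Lam Q)) = sD Q"
    by (rule sdl.log_key[OF uQ sQ])
  have k: "(1 + FL Q s x t) * FL (sD (Lam Q)) s x t = FL (sD Q) s x t" for s x t
    using arg_cong[OF key, of "\<lambda>a. FL a s x t"] bQ bL by simp
  have c: "fls_const (p0 s x t) * fls_const (D p0 s x t / p0 s x t) = fls_const (D p0 s x t)" for s x t
    using nz'[of s x t] by simp
  have sPd: "sD P = ser_add (ser_mult (ser_add (ser_smul (D p0) (ser_mono (int N))) (ser_smul p0 (ser_const (\<lambda>s x t. 0)))) (ser_add ser_one Q))
                 (ser_mult (ser_smul p0 (ser_mono (int N))) (ser_add (ser_const (\<lambda>s x t. 0)) (sD Q)))"
    unfolding Pd using bQ sQ dp by (simp add: sD_mult sD_smul sD_mono sD_add sD_one)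
  have "ser_mult P (sD (logP_ser N P)) = sD P"
  proof (rule ser_eqI)
    show "bnd (ser_mult P (sD (logP_ser N P)))" using bndI[OF P] sDl bL by simp
    show "bnd (sD P)" using bndI[OF P] by simp
    fix s x t
    have "FL (ser_mult P (sD (logP_ser N P))) s x t
        = fls_const (p0 s x t) * FL (ser_mono (int N)) s x t * (1 + FL Q s x t) *
          (fls_const (D p0 s x t / p0 s x t) + FL (sD (Lam Q)) s x t)"
      unfolding sDl unfolding Pd using bQ bL by simp
    also have "\<dots> = (fls_const (p0 s x t) * fls_const (D p0 s x t / p0 s x t)) * FL (ser_mono (int N)) s x t * (1 + FL Q s x t)
         + fls_const (p0 s x t) * FL (ser_mono (int N)) s x t * ((1 + FL Q s x t) * FL (sD (Lam Q)) s x t)"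
      by (simp add: algebra_simps del: fls_const_mult_const)
    also have "\<dots> = fls_const (D p0 s x t) * FL (ser_mono (int N)) s x t * (1 + FL Q s x t)
         + fls_const (p0 s x t) * FL (ser_mono (int N)) s x t * FL (sD Q) s x t"
      by (simp only: c k)
    also have "\<dots> = FL (sD P) s x t"
      unfolding sPd using bQ by simp
    finally show "FL (ser_mult P (sD (logP_ser N P))) s x t = FL (sD P) s x t" .
  qed
  thus ?thesis using sl by simp
qed

end

interpretation dX: dop "\<lambda>s x t y. (s, y, t)" "\<lambda>s x t. x"
  by unfold_locales simp
interpretation dS: dop "\<lambda>s x t y. (y, x, t)" "\<lambda>s x t. s"
  by unfold_locales simp
interpretation dT: dop "\<lambda>s x t y. (s, x, t(n := y))" "\<lambda>s x t. t n" for n :: nat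
  by unfold_locales simp

lemma ser_dx_eq: "ser_dx a = dX.sD a"
  by (intro ext) (simp add: ser_dx_def dX.sD_def pd_x_def dX.D_def ev3_def)
lemma ser_ds_eq: "ser_ds a = dS.sD a"
  by (intro ext) (simp add: ser_ds_def dS.sD_def pd_s_def dS.D_def ev3_def)
lemma ser_dt_eq: "ser_dt n a = dT.sD n a"
  by (intro ext) (simp add: ser_dt_def dT.sD_def pd_t_def dT.D_def ev3_def)
lemma pd_x_eq: "pd_x f = dX.D f"
  by (simp add: pd_x_def dX.D_def ev3_def)
lemma pd_s_eq: "pd_s f = dS.D f"
  by (simp add: pd_s_def dS.D_def ev3_def)

lemma cf_diff_iff: "cf_diff f \<longleftrightarrow> dX.dif f \<and> dS.dif f \<and> (\<forall>n\<ge>1. dT.dif n f)"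
  by (simp add: cf_diff_def dX.dif_def dS.dif_def dT.dif_def ev3_def) blast

lemma sdif_cf: "(\<And>n. cf_diff (a n)) \<Longrightarrow> dX.sdif a \<and> dS.sdif a \<and> (\<forall>n\<ge>1. dT.sdif n a)"
  by (simp add: dX.sdif_def dS.sdif_def dT.sdif_def cf_diff_iff)

lemma cf_sdif: "dX.sdif a \<Longrightarrow> dS.sdif a \<Longrightarrow> (\<And>n. n \<ge> 1 \<Longrightarrow> dT.sdif n a) \<Longrightarrow> cf_diff (a m)"
  by (simp add: dX.sdif_def dS.sdif_def dT.sdif_def cf_diff_iff)

lemma ser_cancel:
  assumes Y: "ub Y M" "\<And>s x t. Y M s x t \<noteq> 0" and A: "bnd A" "bnd B" and eq: "ser_mult Y A = ser_mult Y B"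
  shows "A = B"
proof (rule ser_eqI[OF A])
  fix s x t
  have "FL Y s x t * FL A s x t = FL Y s x t * FL B s x t"
    using arg_cong[OF eq, of "\<lambda>a. FL a s x t"] bndI[OF Y(1)] A by simp
  moreover have "FL Y s x t \<noteq> 0"
  proof
    assume "FL Y s x t = 0"
    hence "FL Y s x t $$ (- M) = 0" by simp
    thus False using FL_nth_ub[OF Y(1)] Y(2)[of s x t] by simp
  qed
  ultimately show "FL A s x t = FL B s x t" by simp
qed

lemma mult_smul_left: "bnd a \<Longrightarrow> bnd b \<Longrightarrow> ser_mult (ser_smul c a) b = ser_smul c (ser_mult a b)"
  by (rule ser_eqI) (simp_all add: mult.assoc)

lemma ub_logP: "ub (logP_ser N P) 0" by (auto simp: ub_def logP_ser_def)
lemma bnd_logP [simp]: "bnd (logP_ser N P)" by (rule bndI[OF ub_logP])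
lemma ub_dk_logP: "ub (dk_logP N P) (-1)"
  by (auto simp: ub_def dk_logP_def ser_dk_def logP_ser_def)
lemma bnd_dk_logP [simp]: "bnd (dk_logP N P)" by (rule bndI[OF ub_dk_logP])

definition PtOf :: "nat \<Rightarrow> ser \<Rightarrow> cf \<Rightarrow> ser" where
  "PtOf N P u = ser_smul (\<lambda>s x t. 1 / P (int N) s x t) (ser_shift P u)"

lemma ub_Pt: "ub P (int N) \<Longrightarrow> ub (PtOf N P u) (int N)"
  unfolding PtOf_def by (intro ub_smul ub_shift)

lemma Pt_lead: assumes P: "ub P (int N)" and nz: "\<And>s x t. P (int N) s x t \<noteq> 0"
  shows "PtOf N P u (int N) s x t = 1"
  using nz[of s x t] by (simp add: PtOf_def ser_smul_def shift_sum[OF P] CC_def)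

lemma R1:
  assumes P: "ub P (int N)" and nz: "\<And>s x t. P (int N) s x t \<noteq> 0"
  shows "dk_logP N (PtOf N P u) = ser_shift (dk_logP N P) u"
proof (rule ser_cancel[OF ub_Pt[OF P]])
  show "\<And>s x t. PtOf N P u (int N) s x t \<noteq> 0" using Pt_lead[OF P nz] by simp
  show "bnd (dk_logP N (PtOf N P u))" by simp
  show "bnd (ser_shift (dk_logP N P) u)" by simp
  have bP: "bnd P" by (rule bndI[OF P])
  have e1: "ser_mult (ser_shift P u) (ser_shift (dk_logP N P) u) = ser_dk (ser_shift P u)"
    using shift_mult[OF bP bnd_dk_logP[of N P], where u=u] dk_log[OF P nz] shift_dk[OF bP, where u=u] by simp
  have "ser_mult (PtOf N P u) (ser_shift (dk_logP N P) u) = ser_dk (PtOf N P u)"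
    unfolding PtOf_def using bP by (simp add: mult_smul_left e1 dk_smul)
  moreover have "ser_mult (PtOf N P u) (dk_logP N (PtOf N P u)) = ser_dk (PtOf N P u)"
    by (rule dk_log[OF ub_Pt[OF P]]) (simp add: Pt_lead[OF P nz])
  ultimately show "ser_mult (PtOf N P u) (dk_logP N (PtOf N P u)) = ser_mult (PtOf N P u) (ser_shift (dk_logP N P) u)"
    by simp
qed

context dop begin

lemma sdif_Pt:
  assumes P: "ub P (int N)" and nz: "\<And>s x t. P (int N) s x t \<noteq> 0" and sP: "sdif P" and du: "dif u"
  shows "sdif (PtOf N P u)"
proof -
  have dp: "dif (P (int N))" using sP by (simp add: sdif_def)
  have "dif (\<lambda>s x t. 1 / P (int N) s x t)" by (rule hasD_dif[OF hasD_inverse[OF dif_hasD[OF dp] nz]])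
  thus ?thesis unfolding PtOf_def using sP du bndI[OF P] by simp
qed

lemma R2:
  assumes P: "ub P (int N)" and nz: "\<And>s x t. P (int N) s x t \<noteq> 0" and sP: "sdif P" and du: "dif u"
  shows "sD (logP_ser N (PtOf N P u)) = ser_diff (ser_diff (ser_shift (sD (logP_ser N P)) u)
            (ser_smul (D u) (ser_shift (dk_logP N P) u))) (ser_const (\<lambda>s x t. D (P (int N)) s x t / P (int N) s x t))"
proof (rule ser_cancel[OF ub_Pt[OF P]])
  show "\<And>s x t. PtOf N P u (int N) s x t \<noteq> 0" using Pt_lead[OF P nz] by simp
  show "bnd (sD (logP_ser N (PtOf N P u)))" by simp
  have bP: "bnd P" by (rule bndI[OF P])
  show "bnd (ser_diff (ser_diff (ser_shift (sD (logP_ser N P)) u)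
            (ser_smul (D u) (ser_shift (dk_logP N P) u))) (ser_const (\<lambda>s x t. D (P (int N)) s x t / P (int N) s x t)))"
    by simp
  define p0 where "p0 = P (int N)"
  have dp: "dif p0" using sP by (simp add: sdif_def p0_def)
  have nz': "\<And>s x t. p0 s x t \<noteq> 0" unfolding p0_def by (rule nz)
  have hinv: "hasD (\<lambda>s x t. 1 / p0 s x t) (\<lambda>s x t. - D p0 s x t / (p0 s x t)^2)"
    by (rule hasD_inverse[OF dif_hasD[OF dp] nz'])
  have sPt: "sdif (PtOf N P u)" by (rule sdif_Pt[OF P nz sP du])
  have l1: "ser_mult (PtOf N P u) (sD (logP_ser N (PtOf N P u))) = sD (PtOf N P u)"
    using sD_log[OF ub_Pt[OF P] _ sPt] Pt_lead[OF P nz] by simp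
  have sl: "sdif (logP_ser N P)" and l0: "ser_mult P (sD (logP_ser N P)) = sD P"
    using sD_log[OF P nz sP] by auto
  have f1: "ser_mult (ser_shift P u) (ser_shift (sD (logP_ser N P)) u) = ser_shift (sD P) u"
    using shift_mult[OF bP bnd_sD[OF bnd_logP[of N P]], where u=u] l0 by simp
  have f2: "ser_mult (ser_shift P u) (ser_shift (dk_logP N P) u) = ser_dk (ser_shift P u)"
    using shift_mult[OF bP bnd_dk_logP[of N P], where u=u] dk_log[OF P nz] shift_dk[OF bP, where u=u] by simp
  have sDPt: "sD (PtOf N P u) = ser_add (ser_smul (\<lambda>s x t. - D p0 s x t / (p0 s x t)^2) (ser_shift P u))
        (ser_smul (\<lambda>s x t. 1 / p0 s x t) (ser_diff (ser_shift (sD P) u) (ser_smul (D u) (ser_dk (ser_shift P u)))))"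
    unfolding PtOf_def p0_def[symmetric] using hasD_dif[OF hinv] sP du bP
    by (simp add: sD_smul hasD_D[OF hinv] sD_shift)
  show "ser_mult (PtOf N P u) (sD (logP_ser N (PtOf N P u))) =
    ser_mult (PtOf N P u) (ser_diff (ser_diff (ser_shift (sD (logP_ser N P)) u)
            (ser_smul (D u) (ser_shift (dk_logP N P) u))) (ser_const (\<lambda>s x t. D (P (int N)) s x t / P (int N) s x t)))"
    unfolding l1
  proof (rule ser_eqI)
    show "bnd (sD (PtOf N P u))" using bP by (simp add: PtOf_def)
    show "bnd (ser_mult (PtOf N P u) (ser_diff (ser_diff (ser_shift (sD (logP_ser N P)) u)
            (ser_smul (D u) (ser_shift (dk_logP N P) u))) (ser_const (\<lambda>s x t. D (P (int N)) s x t / P (int N) s x t))))"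
      using bP by (simp add: PtOf_def)
    fix s x t
    define c where "c = fls_const (1 / p0 s x t)"
    define sp where "sp = FL (ser_shift P u) s x t"
    define A where "A = FL (ser_shift (sD (logP_ser N P)) u) s x t"
    define B where "B = FL (ser_shift (dk_logP N P) u) s x t"
    define du' where "du' = fls_const (D u s x t)"
    define e where "e = fls_const (D p0 s x t / p0 s x t)"
    have k1: "sp * A = FL (ser_shift (sD P) u) s x t"
      unfolding sp_def A_def using arg_cong[OF f1, of "\<lambda>a. FL a s x t"] bP by simp
    have k2: "sp * B = FL (ser_dk (ser_shift P u)) s x t"
      unfolding sp_def B_def using arg_cong[OF f2, of "\<lambda>a. FL a s x t"] bP by (simp del: FL_dk)
    have k3: "c * e = - fls_const (- D p0 s x t / (p0 s x t)^2)"
      unfolding c_def e_def using nz'[of s x t] by (simp add: power2_eq_square)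
    have "FL (ser_mult (PtOf N P u) (ser_diff (ser_diff (ser_shift (sD (logP_ser N P)) u)
            (ser_smul (D u) (ser_shift (dk_logP N P) u))) (ser_const (\<lambda>s x t. D (P (int N)) s x t / P (int N) s x t)))) s x t
        = c * sp * (A - du' * B - e)"
      unfolding PtOf_def c_def sp_def A_def B_def du'_def e_def p0_def using bP by simp
    also have "\<dots> = c * (sp * A) - c * du' * (sp * B) - (c * e) * sp" by (simp add: algebra_simps)
    also have "\<dots> = FL (sD (PtOf N P u)) s x t"
      unfolding k1 k2 k3 sDPt using bP by (simp add: c_def sp_def du'_def algebra_simps del: FL_dk)
    finally show "FL (sD (PtOf N P u)) s x t = FL (ser_mult (PtOf N P u) (ser_diff (ser_diff (ser_shift (sD (logP_ser N P)) u)
            (ser_smul (D u) (ser_shift (dk_logP N P) u))) (ser_const (\<lambda>s x t. D (P (int N)) s x t / P (int N) s x t)))) s x t"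
      by simp
  qed
qed

end

lemma pb_shift:
  assumes "bnd f" "bnd g" "dX.sdif f" "dX.sdif g" "dX.dif u"
  shows "pb (ser_shift f u) (ser_shift g u) = ser_shift (pb f g) u"
proof -
  have e1: "pb (ser_shift f u) (ser_shift g u) = ser_diff (ser_mult (ser_dk (ser_shift f u))
      (ser_diff (ser_shift (dX.sD g) u) (ser_smul (dX.D u) (ser_dk (ser_shift g u)))))
      (ser_mult (ser_diff (ser_shift (dX.sD f) u) (ser_smul (dX.D u) (ser_dk (ser_shift f u)))) (ser_dk (ser_shift g u)))"
    by (simp add: pb_def ser_dx_eq dX.sD_shift assms del: shift_dk)
  have e2: "ser_shift (pb f g) u = ser_diff (ser_mult (ser_dk (ser_shift f u)) (ser_shift (dX.sD g) u))
      (ser_mult (ser_shift (dX.sD f) u) (ser_dk (ser_shift g u)))"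
    by (simp add: pb_def ser_dx_eq assms)
  show ?thesis unfolding e1 e2
    by (rule ser_eqI) (use assms in \<open>simp_all add: algebra_simps del: FL_dk\<close>)
qed

lemma pb_log_shift:
  assumes P: "ub P (int N)" and nz: "\<And>s x t. P (int N) s x t \<noteq> 0" and sP: "dX.sdif P" and du: "dX.dif u"
    and g: "bnd g" "dX.sdif g"
  shows "pb_log N (PtOf N P u) (ser_shift g u) = ser_add (ser_shift (pb_log N P g) u)
           (ser_smul (\<lambda>s x t. dX.D (P (int N)) s x t / P (int N) s x t) (ser_dk (ser_shift g u)))"
proof -
  have e1: "pb_log N (PtOf N P u) (ser_shift g u) = ser_diff (ser_mult (ser_shift (dk_logP N P) u)
      (ser_diff (ser_shift (dX.sD g) u) (ser_smul (dX.D u) (ser_dk (ser_shift g u)))))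
      (ser_mult (ser_diff (ser_diff (ser_shift (dX.sD (logP_ser N P)) u)
            (ser_smul (dX.D u) (ser_shift (dk_logP N P) u))) (ser_const (\<lambda>s x t. dX.D (P (int N)) s x t / P (int N) s x t)))
        (ser_dk (ser_shift g u)))"
    unfolding pb_log_def ser_dx_eq R1[OF P nz] dX.R2[OF P nz sP du] dX.sD_shift[OF du g(1) g(2)] by simp
  have e2: "ser_shift (pb_log N P g) u = ser_diff (ser_mult (ser_shift (dk_logP N P) u) (ser_shift (dX.sD g) u))
      (ser_mult (ser_shift (dX.sD (logP_ser N P)) u) (ser_dk (ser_shift g u)))"
    using g by (simp add: pb_log_def ser_dx_eq)
  show ?thesis unfolding e1 e2
    by (rule ser_eqI) (use g in \<open>simp_all add: algebra_simps del: FL_dk\<close>)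
qed

lemma pb_add_const:
  assumes "bnd A" "bnd g" "dX.sdif A" "dX.dif c"
  shows "pb (ser_add A (ser_const c)) g = ser_diff (pb A g) (ser_smul (dX.D c) (ser_dk g))"
  unfolding pb_def ser_dx_eq using assms
  by (intro ser_eqI) (simp_all add: dk_add dk_const dX.sD_add dX.sD_const algebra_simps del: FL_dk)

lemma pb_log_add_const:
  assumes "bnd A" "dX.sdif A" "dX.dif c"
  shows "pb_log N Q (ser_add A (ser_const c)) = ser_add (pb_log N Q A) (ser_smul (dX.D c) (dk_logP N Q))"
  unfolding pb_log_def ser_dx_eq using assms
  by (intro ser_eqI) (simp_all add: dk_add dk_const dX.sD_add dX.sD_const algebra_simps del: FL_dk)

lemma coef0_zero: "ub Y a \<Longrightarrow> ub Z b \<Longrightarrow> a + b < 0 \<Longrightarrow> ser_mult Y Z 0 s x t = 0"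
  using ub_mult[of Y a Z b] by (auto simp: ub_def)

lemma L1_fun: "(\<And>s x t. L 1 s x t = 1) \<Longrightarrow> L 1 = (\<lambda>s x t. 1)" by (intro ext) simp

lemma coef0_dx:
  assumes Y: "ub Y (-1)" and L: "ub L 1" "\<And>s x t. L 1 s x t = 1"
  shows "ser_mult Y (ser_dx L) 0 s x t = 0"
proof -
  have z: "ser_dx L 1 = (\<lambda>s x t. 0)" by (simp add: ser_dx_eq dX.sD_def L1_fun[of L, OF L(2)] dX.D_constf)
  have u: "ub (ser_dx L) 1" by (simp add: ser_dx_eq dX.ub_sD[OF L(1)])
  show ?thesis by (subst mult_sum[OF Y u]) (simp add: z)
qed

lemma coef0_dk:
  assumes X: "ub X 0" and L: "ub L 1" "\<And>s x t. L 1 s x t = 1"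
  shows "ser_mult X (ser_dk L) 0 s x t = X 0 s x t"
proof -
  have u: "ub (ser_dk L) 0" using ub_dk[OF L(1)] by simp
  show ?thesis by (subst mult_sum[OF X u]) (simp add: ser_dk_def L(2))
qed

lemma coef0_pb:
  assumes M: "ub M 0" and L: "ub L 1" "\<And>s x t. L 1 s x t = 1"
  shows "pb M L 0 s x t = - ser_dx M 0 s x t"
proof -
  have "ser_mult (ser_dk M) (ser_dx L) 0 s x t = 0" using ub_dk[OF M] by (intro coef0_dx[OF _ L]) simp
  moreover have "ser_mult (ser_dx M) (ser_dk L) 0 s x t = ser_dx M 0 s x t"
    by (rule coef0_dk[OF _ L]) (simp add: ser_dx_eq dX.ub_sD[OF M])
  ultimately show ?thesis by (simp add: pb_def ser_diff_def)
qed

lemma coef0_pb_log_M: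
  assumes M: "ub M 0"
  shows "pb_log N Q M 0 s x t = 0"
proof -
  have "ser_mult (dk_logP N Q) (ser_dx M) 0 s x t = 0"
    by (rule coef0_zero[OF ub_dk_logP]) (auto simp: ser_dx_eq intro: dX.ub_sD[OF M])
  moreover have "ser_mult (ser_dx (logP_ser N Q)) (ser_dk M) 0 s x t = 0"
    by (rule coef0_zero[OF _ ub_dk[OF M]]) (auto simp: ser_dx_eq intro: dX.ub_sD[OF ub_logP])
  ultimately show ?thesis by (simp add: pb_log_def ser_diff_def)
qed

lemma coef0_pb_log_L:
  assumes L: "ub L 1" "\<And>s x t. L 1 s x t = 1"
  shows "pb_log N Q L 0 s x t = - ser_dx (logP_ser N Q) 0 s x t"
proof -
  have "ser_mult (dk_logP N Q) (ser_dx L) 0 s x t = 0" by (rule coef0_dx[OF ub_dk_logP L])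
  moreover have "ser_mult (ser_dx (logP_ser N Q)) (ser_dk L) 0 s x t = ser_dx (logP_ser N Q) 0 s x t"
    by (rule coef0_dk[OF _ L]) (simp add: ser_dx_eq dX.ub_sD[OF ub_logP])
  ultimately show ?thesis by (simp add: pb_log_def ser_diff_def)
qed

lemma pb_pow_self:
  assumes "bnd L" "dX.sdif L"
  shows "pb (ser_pow L (Suc m)) L = ser_const (\<lambda>s x t. 0)"
proof (rule ser_eqI)
  show "bnd (pb (ser_pow L (Suc m)) L)" using assms by (simp add: pb_def ser_dx_eq del: ser_pow.simps)
  show "bnd (ser_const (\<lambda>s x t. 0))" by simp
  fix s x t
  show "FL (pb (ser_pow L (Suc m)) L) s x t = FL (ser_const (\<lambda>s x t. 0)) s x t"
    using assms unfolding pb_def ser_dx_eq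
    by (simp add: dkl.FL_Dop_pow dX.sdl.FL_Dop_pow del: ser_pow.simps FL_dk)
qed

lemma pb_log_pow:
  assumes "bnd L" "dX.sdif L" "dS.sdif L" and hyp: "ser_ds L = pb_log N P L"
  shows "pb_log N P (ser_pow L (Suc m)) = ser_ds (ser_pow L (Suc m))"
proof (rule ser_eqI)
  show "bnd (pb_log N P (ser_pow L (Suc m)))" using assms by (simp add: pb_log_def ser_dx_eq del: ser_pow.simps)
  show "bnd (ser_ds (ser_pow L (Suc m)))" using assms by (simp add: ser_ds_eq del: ser_pow.simps)
  fix s x t
  have h: "FL (dS.sD L) s x t = FL (dk_logP N P) s x t * FL (dX.sD L) s x t - FL (dX.sD (logP_ser N P)) s x t * FL (ser_dk L) s x t"
    using arg_cong[OF hyp, of "\<lambda>a. FL a s x t"] assms by (simp add: pb_log_def ser_dx_eq ser_ds_eq del: FL_dk)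
  show "FL (pb_log N P (ser_pow L (Suc m))) s x t = FL (ser_ds (ser_pow L (Suc m))) s x t"
    using assms unfolding pb_log_def ser_dx_eq ser_ds_eq
    by (simp add: dkl.FL_Dop_pow dX.sdl.FL_Dop_pow dS.sdl.FL_Dop_pow h algebra_simps del: ser_pow.simps FL_dk)
qed

lemma (in dop) sdif_proj_pos: "sdif a \<Longrightarrow> sdif (proj_pos a)"
  by (auto simp: sdif_def proj_pos_def cf0_def dif_const)

lemma pb_diff_left:
  assumes "bnd a" "bnd b" "bnd g" "dX.sdif a" "dX.sdif b"
  shows "pb (ser_diff a b) g = ser_diff (pb a g) (pb b g)"
  unfolding pb_def ser_dx_eq using assms
  by (intro ser_eqI) (simp_all add: dk_diff dX.sD_diff algebra_simps del: FL_dk)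

lemma pb_log_diff_right:
  assumes "bnd a" "bnd b" "dX.sdif a" "dX.sdif b"
  shows "pb_log N Q (ser_diff a b) = ser_diff (pb_log N Q a) (pb_log N Q b)"
  unfolding pb_log_def ser_dx_eq using assms
  by (intro ser_eqI) (simp_all add: dk_diff dX.sD_diff algebra_simps del: FL_dk)

lemma bnd_pb [simp]: "bnd f \<Longrightarrow> bnd g \<Longrightarrow> bnd (pb f g)"
  by (simp add: pb_def ser_dx_eq)
lemma bnd_pb_log [simp]: "bnd g \<Longrightarrow> bnd (pb_log N Q g)"
  by (simp add: pb_log_def ser_dx_eq)

locale sit =
  fixes N :: nat and L P :: ser
  assumes dc: "dcmKP N L P"
begin

lemma uL: "ub L 1"
  using dc unfolding dcmKP_def ub_def by (auto simp: cf0_def)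
lemma uP: "ub P (int N)"
  using dc unfolding dcmKP_def ub_def by (auto simp: cf0_def)
lemma L1: "L 1 s x t = 1" using dc unfolding dcmKP_def by auto
lemma nz: "P (int N) s x t \<noteq> 0" using dc unfolding dcmKP_def by auto
lemma Plow: "n < 1 \<Longrightarrow> P n s x t = 0" using dc unfolding dcmKP_def by (auto simp: cf0_def)
lemma bL [simp]: "bnd L" by (rule bndI[OF uL])
lemma bP [simp]: "bnd P" by (rule bndI[OF uP])
lemma cL: "cf_diff (L n)" using dc unfolding dcmKP_def by auto
lemma cP: "cf_diff (P n)" using dc unfolding dcmKP_def by auto
lemma sLX [simp]: "dX.sdif L" using sdif_cf[of L] cL by blast
lemma sLS [simp]: "dS.sdif L" using sdif_cf[of L] cL by blast
lemma sLT: "1 \<le> n \<Longrightarrow> dT.sdif n L" using sdif_cf[of L] cL by blast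
lemma sPX [simp]: "dX.sdif P" using sdif_cf[of P] cP by blast
lemma sPS [simp]: "dS.sdif P" using sdif_cf[of P] cP by blast
lemma sPT: "1 \<le> n \<Longrightarrow> dT.sdif n P" using sdif_cf[of P] cP by blast
lemma duX [simp]: "dX.dif (L 0)" using sLX by (simp add: dX.sdif_def)
lemma duS [simp]: "dS.dif (L 0)" using sLS by (simp add: dS.sdif_def)
lemma duT: "1 \<le> n \<Longrightarrow> dT.dif n (L 0)" using sLT by (simp add: dT.sdif_def)
lemma H1: "1 \<le> n \<Longrightarrow> ser_dt n L = pb (proj_pos (ser_pow L n)) L"
  using dc unfolding dcmKP_def hier_eqs_def by auto
lemma H2: "ser_ds L = pb_log N P L"
  using dc unfolding dcmKP_def hier_eqs_def by auto
lemma H3: "1 \<le> n \<Longrightarrow> ser_dt n (logP_ser N P) = ser_diff (ser_ds (proj_pos (ser_pow L n))) (pb_log N P (proj_pos (ser_pow L n)))"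
  using dc unfolding dcmKP_def hier_eqs_def by auto

definition Bn :: "nat \<Rightarrow> ser" where "Bn n = proj_pos (ser_pow L n)"
definition Mn :: "nat \<Rightarrow> ser" where "Mn n = ser_diff (ser_pow L n) (Bn n)"
definition cn :: "nat \<Rightarrow> cf" where "cn n = ser_pow L n 0"

lemma ub_powL: "ub (ser_pow L n) (int n)" using ub_pow[OF uL, of n] by simp
lemma ub_Bn: "ub (Bn n) (int n)" using ub_powL by (auto simp: ub_def Bn_def proj_pos_def cf0_def)
lemma bBn [simp]: "bnd (Bn n)" by (rule bndI[OF ub_Bn])
lemma ub_Mn: "ub (Mn n) 0" by (auto simp: ub_def Mn_def Bn_def proj_pos_def ser_diff_def)
lemma bMn [simp]: "bnd (Mn n)" by (rule bndI[OF ub_Mn])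
lemma Mn0: "Mn n 0 = cn n" by (intro ext) (simp add: Mn_def Bn_def proj_pos_def ser_diff_def cn_def cf0_def)
lemma Bn_eq: "Bn n = ser_diff (ser_pow L n) (Mn n)"
  by (intro ext) (simp add: Mn_def ser_diff_def)

lemma sBX [simp]: "dX.sdif (Bn n)" unfolding Bn_def by (intro dX.sdif_proj_pos dX.sdif_pow) simp_all
lemma sBS [simp]: "dS.sdif (Bn n)" unfolding Bn_def by (intro dS.sdif_proj_pos dS.sdif_pow) simp_all
lemma sMX [simp]: "dX.sdif (Mn n)" unfolding Mn_def by (intro dX.sdif_diff dX.sdif_pow) simp_all
lemma sMS [simp]: "dS.sdif (Mn n)" unfolding Mn_def by (intro dS.sdif_diff dS.sdif_pow) simp_all
lemma dcX [simp]: "dX.dif (cn n)" using dX.sdif_pow[OF bL sLX, of n] by (simp add: dX.sdif_def cn_def)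
lemma dcS [simp]: "dS.dif (cn n)" using dS.sdif_pow[OF bL sLS, of n] by (simp add: dS.sdif_def cn_def)

lemma Bt_eq: "proj_nonneg (ser_pow (ser_shift L (L 0)) n) = ser_add (ser_shift (Bn n) (L 0)) (ser_const (cn n))"
  using proj_shift[OF ub_powL[of n], where u="L 0"] shift_pow[OF bL, where n=n and u="L 0"] by (simp add: Bn_def cn_def)

lemma K1: assumes n: "1 \<le> n" shows "dT.D n (L 0) = dX.D (cn n)"
proof (intro ext)
  fix s x t
  obtain m where m: "n = Suc m" using n by (cases n) auto
  have "ser_dt n L 0 s x t = pb (Bn n) L 0 s x t" using H1[OF n] by (simp add: Bn_def)
  moreover have "ser_dt n L 0 s x t = dT.D n (L 0) s x t" by (simp add: ser_dt_eq dT.sD_def)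
  moreover have "pb (Bn n) L = ser_diff (pb (ser_pow L n) L) (pb (Mn n) L)"
    unfolding Bn_eq[of n] by (rule pb_diff_left) simp_all
  moreover have "pb (ser_pow L n) L = ser_const (\<lambda>s x t. 0)" unfolding m by (rule pb_pow_self) simp_all
  moreover have "pb (Mn n) L 0 s x t = - ser_dx (Mn n) 0 s x t" by (rule coef0_pb[OF ub_Mn uL L1])
  moreover have "ser_dx (Mn n) 0 s x t = dX.D (cn n) s x t" by (simp add: ser_dx_eq dX.sD_def Mn0)
  ultimately show "dT.D n (L 0) s x t = dX.D (cn n) s x t" by (simp add: ser_diff_def ser_const_def)
qed

lemma K2: "dS.D (L 0) = (\<lambda>s x t. - (dX.D (P (int N)) s x t / P (int N) s x t))"
proof (intro ext)
  fix s x t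
  have hl: "dX.hasD (\<lambda>s x t. ln \<bar>P (int N) s x t\<bar>) (\<lambda>s x t. dX.D (P (int N)) s x t / P (int N) s x t)"
    by (rule dX.hasD_ln_abs[OF dX.dif_hasD nz]) (use sPX in \<open>simp add: dX.sdif_def\<close>)
  have "ser_ds L 0 s x t = pb_log N P L 0 s x t" using H2 by simp
  moreover have "ser_ds L 0 s x t = dS.D (L 0) s x t" by (simp add: ser_ds_eq dS.sD_def)
  moreover have "pb_log N P L 0 s x t = - ser_dx (logP_ser N P) 0 s x t" by (rule coef0_pb_log_L[OF uL L1])
  moreover have "logP_ser N P 0 = (\<lambda>s x t. ln \<bar>P (int N) s x t\<bar>)" by (intro ext) (simp add: logP_ser_def)
  ultimately show "dS.D (L 0) s x t = - (dX.D (P (int N)) s x t / P (int N) s x t)"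
    by (simp add: ser_dx_eq dX.sD_def dX.hasD_D[OF hl])
qed

lemma K3: assumes n: "1 \<le> n" shows "dS.D (cn n) = (\<lambda>s x t. - (dT.D n (P (int N)) s x t / P (int N) s x t))"
proof (intro ext)
  fix s x t
  obtain m where m: "n = Suc m" using n by (cases n) auto
  have hl: "dT.hasD n (\<lambda>s x t. ln \<bar>P (int N) s x t\<bar>) (\<lambda>s x t. dT.D n (P (int N)) s x t / P (int N) s x t)"
    by (rule dT.hasD_ln_abs[OF dT.dif_hasD nz]) (use sPT[OF n] in \<open>simp add: dT.sdif_def\<close>)
  have lp0: "logP_ser N P 0 = (\<lambda>s x t. ln \<bar>P (int N) s x t\<bar>)" by (intro ext) (simp add: logP_ser_def)
  have "ser_dt n (logP_ser N P) 0 s x t = ser_diff (ser_ds (Bn n)) (pb_log N P (Bn n)) 0 s x t"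
    using H3[OF n] by (simp add: Bn_def)
  moreover have "ser_dt n (logP_ser N P) 0 s x t = dT.D n (P (int N)) s x t / P (int N) s x t"
    by (simp add: ser_dt_eq dT.sD_def lp0 dT.hasD_D[OF hl])
  moreover have "ser_ds (Bn n) 0 s x t = 0"
  proof -
    have "Bn n 0 = (\<lambda>s x t. 0)" by (simp add: Bn_def proj_pos_def cf0_def)
    thus ?thesis by (simp add: ser_ds_eq dS.sD_def dS.D_constf)
  qed
  moreover have "pb_log N P (Bn n) = ser_diff (pb_log N P (ser_pow L n)) (pb_log N P (Mn n))"
    unfolding Bn_eq[of n] by (rule pb_log_diff_right) simp_all
  moreover have "pb_log N P (ser_pow L n) = ser_ds (ser_pow L n)" unfolding m by (rule pb_log_pow) (simp_all add: H2)
  moreover have "pb_log N P (Mn n) 0 s x t = 0" by (rule coef0_pb_log_M[OF ub_Mn])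
  moreover have "ser_ds (ser_pow L n) 0 s x t = dS.D (cn n) s x t" by (simp add: ser_ds_eq dS.sD_def cn_def)
  ultimately show "dS.D (cn n) s x t = - (dT.D n (P (int N)) s x t / P (int N) s x t)"
    by (simp add: ser_diff_def)
qed

lemma G1: "ser_shift L (L 0) 1 s x t = 1"
  by (simp add: shift_sum[OF uL] CC_def L1)

lemma G2: "ser_shift L (L 0) 0 = cf0"
proof (intro ext)
  fix s x t
  have e: "{0..1::int} = {0,1}" by auto
  show "ser_shift L (L 0) 0 s x t = cf0 s x t"
    by (simp add: shift_sum[OF uL] e CC_def L1 cf0_def)
qed

lemma G3: "1 < n \<Longrightarrow> ser_shift L (L 0) n = cf0"
  using ub_shift[OF uL, of "L 0"] by (intro ext) (simp add: ub_def cf0_def)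

lemma G5: "n < 0 \<or> n > int N \<Longrightarrow> PtOf N P (L 0) n = cf0"
proof (intro ext)
  fix s x t
  assume n: "n < 0 \<or> n > int N"
  show "PtOf N P (L 0) n s x t = cf0 s x t"
  proof (cases "n < 0")
    case True
    have "(\<Sum>k\<in>{n..int N}. P k s x t * CC (- L 0 s x t) k (k - n)) = 0"
    proof (intro sum.neutral ballI)
      fix k assume k: "k \<in> {n..int N}"
      show "P k s x t * CC (- L 0 s x t) k (k - n) = 0"
      proof (cases "k < 1")
        case True thus ?thesis by (simp add: Plow)
      next
        case False
        hence "(of_int k gchoose nat (k - n) :: real) = 0" using \<open>n < 0\<close> by (intro gch_zero) auto
        thus ?thesis by (simp add: CC_def)
      qed
    qed
    thus ?thesis by (simp add: PtOf_def ser_smul_def shift_sum[OF uP] cf0_def)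
  next
    case False
    hence "n > int N" using n by simp
    thus ?thesis using ub_Pt[OF uP, of "L 0"] by (simp add: ub_def cf0_def)
  qed
qed

lemma G6: "cf_diff (ser_shift L (L 0) n)"
proof (rule cf_sdif)
  fix k :: nat assume k: "1 \<le> k"
  show "dT.sdif k (ser_shift L (L 0))" using dT.sdif_shift[OF duT[OF k] bL sLT[OF k]] .
qed simp_all

lemma G7: "cf_diff (PtOf N P (L 0) n)"
  by (rule cf_sdif) (auto intro!: dX.sdif_Pt dS.sdif_Pt dT.sdif_Pt uP nz duT sPT)

lemma G8a: assumes n: "1 \<le> n"
  shows "ser_dt n (ser_shift L (L 0)) = pb (proj_nonneg (ser_pow (ser_shift L (L 0)) n)) (ser_shift L (L 0))"
proof -
  have "ser_dt n (ser_shift L (L 0)) = ser_diff (ser_shift (pb (Bn n) L) (L 0)) (ser_smul (dT.D n (L 0)) (ser_dk (ser_shift L (L 0))))"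
    unfolding ser_dt_eq dT.sD_shift[OF duT[OF n] bL sLT[OF n]] using H1[OF n] by (simp add: ser_dt_eq Bn_def)
  moreover have "pb (proj_nonneg (ser_pow (ser_shift L (L 0)) n)) (ser_shift L (L 0))
      = ser_diff (ser_shift (pb (Bn n) L) (L 0)) (ser_smul (dX.D (cn n)) (ser_dk (ser_shift L (L 0))))"
    unfolding Bt_eq by (simp add: pb_add_const pb_shift)
  ultimately show ?thesis by (simp add: K1[OF n])
qed

lemma G8b: "ser_ds (ser_shift L (L 0)) = pb_log N (PtOf N P (L 0)) (ser_shift L (L 0))"
proof -
  have "ser_ds (ser_shift L (L 0)) = ser_diff (ser_shift (pb_log N P L) (L 0)) (ser_smul (dS.D (L 0)) (ser_dk (ser_shift L (L 0))))"
    unfolding ser_ds_eq dS.sD_shift[OF duS bL sLS] using H2 by (simp add: ser_ds_eq)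
  moreover have "pb_log N (PtOf N P (L 0)) (ser_shift L (L 0)) = ser_add (ser_shift (pb_log N P L) (L 0))
           (ser_smul (\<lambda>s x t. dX.D (P (int N)) s x t / P (int N) s x t) (ser_dk (ser_shift L (L 0))))"
    by (rule pb_log_shift[OF uP nz sPX duX bL sLX])
  ultimately show ?thesis by (simp add: K2) (simp add: ser_diff_def ser_add_def ser_smul_def)
qed

lemma G8c: assumes n: "1 \<le> n"
  shows "ser_dt n (logP_ser N (PtOf N P (L 0))) = ser_diff (ser_ds (proj_nonneg (ser_pow (ser_shift L (L 0)) n)))
           (pb_log N (PtOf N P (L 0)) (proj_nonneg (ser_pow (ser_shift L (L 0)) n)))"
proof -
  have sl: "dT.sdif n (logP_ser N P)" using dT.sD_log[OF uP nz sPT[OF n]] by simp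
  have L: "ser_dt n (logP_ser N (PtOf N P (L 0))) = ser_diff (ser_diff (ser_shift (ser_diff (dS.sD (Bn n)) (pb_log N P (Bn n))) (L 0))
            (ser_smul (dT.D n (L 0)) (ser_shift (dk_logP N P) (L 0)))) (ser_const (\<lambda>s x t. dT.D n (P (int N)) s x t / P (int N) s x t))"
    unfolding ser_dt_eq dT.R2[OF uP nz sPT[OF n] duT[OF n]] using H3[OF n] by (simp add: ser_dt_eq ser_ds_eq Bn_def)
  have R: "ser_diff (ser_ds (proj_nonneg (ser_pow (ser_shift L (L 0)) n)))
           (pb_log N (PtOf N P (L 0)) (proj_nonneg (ser_pow (ser_shift L (L 0)) n)))
     = ser_diff (ser_add (ser_diff (ser_shift (dS.sD (Bn n)) (L 0)) (ser_smul (dS.D (L 0)) (ser_dk (ser_shift (Bn n) (L 0))))) (ser_const (dS.D (cn n))))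
        (ser_add (ser_add (ser_shift (pb_log N P (Bn n)) (L 0))
           (ser_smul (\<lambda>s x t. dX.D (P (int N)) s x t / P (int N) s x t) (ser_dk (ser_shift (Bn n) (L 0)))))
         (ser_smul (dX.D (cn n)) (ser_shift (dk_logP N P) (L 0))))"
    unfolding Bt_eq ser_ds_eq
    by (simp add: dS.sD_add dS.sD_shift dS.sD_const pb_log_add_const pb_log_shift[OF uP nz sPX duX] R1[OF uP nz] del: shift_dk)
  show ?thesis
    unfolding L R K1[OF n] K2 K3[OF n]
    by (rule ser_eqI) (simp_all add: algebra_simps del: FL_dk)
qed

end

theorem mainTheorem12:
  fixes N :: nat and L P :: ser
  assumes "dcmKP N L P"
  shows "dmKP N (ser_shift L (L 0))
                (\<lambda>m s x t. ser_shift P (L 0) m s x t / P (int N) s x t)"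
proof -
  interpret sit N L P by (rule sit.intro[OF assms])
  have Pt_eq: "(\<lambda>m s x t. ser_shift P (L 0) m s x t / P (int N) s x t) = PtOf N P (L 0)"
    by (intro ext) (simp add: PtOf_def ser_smul_def)
  show ?thesis
    unfolding Pt_eq dmKP_def hier_eqs_def
    using G1 G2 G3 G5 G6 G7 G8a G8b G8c Pt_lead[OF uP nz] by auto
qed

end
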